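(* Let $A=(a_{ik})$ be a real symmetric $n\times n$ matrix whose induced signed graph $\Gamma=(T,\sigma)$, $T=(V,E)$, has no cycle. Let $\lambda$ be an eigenvalue of $A$ with multiplicity $r$ and let $f:V\to\mathbb R$ be an eigenfunction for $\lambda$. Let $\mathcal F=\{x\in V: f(x)=0\text{ and }f(y)=0\text{ for all }y\sim x\}$, and let $\tilde r$ be the multiplicity of $\lambda$ as an eigenvalue of the matrix $\widetilde A$ obtained from $A$ by deleting all rows and columns with indices in $\mathcal F$. Then $$r\ge\tilde r=e_0-2z+c+|\mathcal F|,$$ where $z=|\{x\in V: f(x)=0\}|$, $e_0=|\{\{x,y\}\in E: f(x)=0\text{ or }f(y)=0\}|$, and $c$ is the number of connected components of $T$.
   Context: The induced signed graph of a real symmetric $n\times n$ matrix $A$ has vertex set $V=\{x_1,\dots,x_n\}$ (identified with indices), edge $\{x_i,x_j\}$ iff $i\ne j$ and $a_{ij}\ne0$, and sign $-a_{ij}/|a_{ij}|$. Eigenfunctions are nonzero eigenvectors viewed as functions on $V$; $y\sim x$ means $\{x,y\}\in E$. *)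

theory Defs
  imports "Jordan_Normal_Form.Char_Poly" "Jordan_Normal_Form.DL_Submatrix"
begin

text \<open>Underlying (unsigned) graph T = (V,E) of the induced signed graph of a square
matrix A: vertices are the indices 0..<n, and i,j (i different from j) are adjacent iff A(i,j) is nonzero.\<close>

definition mvert :: "real mat \<Rightarrow> nat set" where
  "mvert A = {0..<dim_row A}"

definition madj :: "real mat \<Rightarrow> nat \<Rightarrow> nat \<Rightarrow> bool" where
  "madj A i j \<longleftrightarrow> i < dim_row A \<and> j < dim_row A \<and> i \<noteq> j \<and> A $$ (i, j) \<noteq> 0"

definition medges :: "real mat \<Rightarrow> nat set set" where
  "medges A = {{i, j} | i j. madj A i j}"

definition has_cycle :: "real mat \<Rightarrow> bool" where
  "has_cycle A \<longleftrightarrow> (\<exists>vs. length vs \<ge> 3 \<and> distinct vs \<and>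
      (\<forall>i < length vs. madj A (vs ! i) (vs ! ((i + 1) mod length vs))))"

definition num_components :: "real mat \<Rightarrow> nat" where
  "num_components A = card (mvert A // {(i, j). i \<in> mvert A \<and> j \<in> mvert A \<and> (madj A)\<^sup>*\<^sup>* i j})"

text \<open>Multiplicity of an eigenvalue (as a root of the characteristic polynomial;
for symmetric matrices this equals the dimension of the eigenspace).
Non-eigenvalues have multiplicity 0.\<close>
definition eig_mult :: "real mat \<Rightarrow> real \<Rightarrow> nat" where
  "eig_mult A lam = order lam (char_poly A)"

end

theory Submission
  imports Defs "HOL-Library.Function_Algebras" "Jordan_Normal_Form.Jordan_Normal_Form_Uniqueness" "Jordan_Normal_Form.Jordan_Normal_Form_Existence"
begin

interpretation fs: vector_space "\<lambda>(c::real) (g::nat \<Rightarrow> real). (\<lambda>x. c * g x)"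
  by unfold_locales (auto simp: fun_eq_iff algebra_simps)

interpretation fsp: vector_space_pair "\<lambda>(c::real) (g::nat \<Rightarrow> real). (\<lambda>x. c * g x)" "\<lambda>(c::real) (g::nat \<Rightarrow> real). (\<lambda>x. c * g x)"
  by unfold_locales

lemma sum_fun_app: "(\<Sum>a\<in>A. F a) (x::nat) = (\<Sum>a\<in>A. (F a x :: real))"
  by (induct A rule: infinite_finite_induct) auto

definition delta :: "nat \<Rightarrow> nat \<Rightarrow> real" where
  "delta v = (\<lambda>x. if x = v then 1 else 0)"

definition supp_on :: "nat set \<Rightarrow> (nat \<Rightarrow> real) set" where
  "supp_on T = {g. \<forall>x. x \<notin> T \<longrightarrow> g x = 0}"

lemma supp_on_span:
  assumes "finite T" "g \<in> supp_on T"
  shows "g \<in> fs.span (delta ` T)"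
proof -
  have "g = (\<Sum>x\<in>T. (\<lambda>y. g x * delta x y))"
  proof
    fix y
    show "g y = (\<Sum>x\<in>T. (\<lambda>y. g x * delta x y)) y"
      unfolding sum_fun_app using assms
      by (cases "y \<in> T") (auto simp: delta_def supp_on_def mult.commute[of "g _"] if_distrib sum.delta cong: if_cong)
  qed
  also have "\<dots> \<in> fs.span (delta ` T)"
    by (intro fs.span_sum) (auto intro: fs.span_scale fs.span_base)
  finally show ?thesis .
qed

lemma basis_fin:
  assumes "finite T" "V \<subseteq> supp_on T"
  obtains B where "B \<subseteq> V" "fs.independent B" "V \<subseteq> fs.span B" "card B = fs.dim V" "finite B"
proof -
  obtain B where B: "B \<subseteq> V" "fs.independent B" "V \<subseteq> fs.span B" "card B = fs.dim V"
    using fs.basis_exists by blast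
  have "B \<subseteq> fs.span (delta ` T)" using B(1) assms supp_on_span by blast
  then have "finite B" using fs.independent_span_bound[of "delta ` T" B] B(2) assms(1) by auto
  with B that show ?thesis by blast
qed

lemma dim_mono_supp:
  assumes "finite T" "W \<subseteq> supp_on T" "V \<subseteq> W"
  shows "fs.dim V \<le> fs.dim W"
proof -
  obtain B where B: "B \<subseteq> V" "fs.independent B" "V \<subseteq> fs.span B" "card B = fs.dim V" "finite B"
    using basis_fin[of T V] assms by blast
  obtain C where C: "C \<subseteq> W" "fs.independent C" "W \<subseteq> fs.span C" "card C = fs.dim W" "finite C"
    using basis_fin[of T W] assms by blast
  have "B \<subseteq> fs.span C" using B(1) assms(3) C(3) by blast
  then have "card B \<le> card C" using fs.independent_span_bound[of C B] C(5) B(2) by auto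
  then show ?thesis using B C by simp
qed

lemma dim_iso:
  assumes "finite T" "V \<subseteq> supp_on T" "fs.subspace V"
    and lin: "Vector_Spaces.linear (\<lambda>(c::real) (g::nat \<Rightarrow> real). (\<lambda>x. c * g x)) (\<lambda>(c::real) (g::nat \<Rightarrow> real). (\<lambda>x. c * g x)) L"
    and inj: "inj_on L V" and img: "L ` V = W"
  shows "fs.dim W = fs.dim V"
proof -
  obtain B where B: "B \<subseteq> V" "fs.independent B" "V \<subseteq> fs.span B" "card B = fs.dim V" "finite B"
    using basis_fin[of T V] assms by blast
  have spB: "fs.span B = V"
    using B(1,3) fs.span_minimal[OF B(1) assms(3)] by blast
  have ind: "fs.independent (L ` B)"
    using fsp.linear_independent_injective_image[OF lin B(2)] inj spB by simp
  have spL: "fs.span (L ` B) = W"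
    using fsp.linear_span_image[OF lin, of B] spB img by simp
  have "card (L ` B) = card B"
    using card_image[OF inj_on_subset[OF inj B(1)]] .
  moreover have "card (L ` B) = fs.dim W"
    using fs.basis_card_eq_dim[of "L ` B" W] ind spL fs.span_superset[of "L ` B"] by auto
  ultimately show ?thesis using B(4) by simp
qed


definition KS :: "(nat \<Rightarrow> nat \<Rightarrow> real) \<Rightarrow> nat set \<Rightarrow> (nat \<Rightarrow> real) set" where
  "KS M T = {g. (\<forall>x. x \<notin> T \<longrightarrow> g x = 0) \<and> (\<forall>x\<in>T. (\<Sum>y\<in>T. M x y * g y) = 0)}"

definition dK :: "(nat \<Rightarrow> nat \<Rightarrow> real) \<Rightarrow> nat set \<Rightarrow> nat" where
  "dK M T = fs.dim (KS M T)"

lemma KS_supp: "KS M T \<subseteq> supp_on T"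
  unfolding KS_def supp_on_def by auto

lemma KS_subspace: "fs.subspace (KS M T)"
  unfolding fs.subspace_def
proof (intro conjI ballI allI)
  show "0 \<in> KS M T" by (simp add: KS_def)
next
  fix g h assume g: "g \<in> KS M T" and h: "h \<in> KS M T"
  show "g + h \<in> KS M T"
    using g h unfolding KS_def by (simp add: distrib_left sum.distrib)
next
  fix c g assume g: "g \<in> KS M T"
  have "(\<Sum>y\<in>T. M z y * (c * g y)) = c * (\<Sum>y\<in>T. M z y * g y)" for z
    by (simp add: sum_distrib_left mult.left_commute)
  then show "(\<lambda>x. c * g x) \<in> KS M T"
    using g unfolding KS_def by simp
qed

lemma sum_split2:
  assumes "finite T" "u \<in> T" "v \<in> T" "u \<noteq> v"
  shows "sum F T = F u + F v + sum F (T - {u, v})"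
proof -
  have "sum F T = F u + sum F (T - {u})" using assms by (intro sum.remove)
  also have "sum F (T - {u}) = F v + sum F (T - {u} - {v})"
    using assms by (intro sum.remove) auto
  also have "T - {u} - {v} = T - {u, v}" by auto
  finally show ?thesis by (simp add: add.assoc)
qed

lemma sum_split1:
  assumes "finite T" "u \<in> T"
  shows "sum F T = F u + sum F (T - {u})"
  using assms by (rule sum.remove)

lemma K1:
  assumes fin: "finite T" and vT: "v \<in> T" and Mvv: "M v v = 0"
    and iso: "\<forall>y\<in>T. y \<noteq> v \<longrightarrow> M v y = 0 \<and> M y v = 0"
  shows "dK M T = dK M (T - {v}) + 1"
proof -
  let ?T = "T - {v}"
  have KSsup: "KS M ?T \<subseteq> supp_on T" using KS_supp[of M ?T] unfolding supp_on_def by auto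
  obtain B where B: "B \<subseteq> KS M ?T" "fs.independent B" "KS M ?T \<subseteq> fs.span B"
     "card B = fs.dim (KS M ?T)" "finite B"
    using basis_fin[of T "KS M ?T", OF fin KSsup] by metis
  have spB: "fs.span B = KS M ?T"
    using B(1,3) fs.span_minimal[OF B(1) KS_subspace] by blast
  have dnot: "delta v \<notin> fs.span B"
    unfolding spB KS_def delta_def by auto
  have ind: "fs.independent (insert (delta v) B)"
    using fs.independent_insertI[OF dnot B(2)] .
  have dK: "delta v \<in> KS M T"
  proof -
    have "(\<Sum>y\<in>T. M x y * delta v y) = 0" if "x \<in> T" for x
    proof -
      have "(\<Sum>y\<in>T. M x y * delta v y) = M x v"
        unfolding delta_def using vT fin by (simp add: if_distrib sum.delta' cong: if_cong)
      then show ?thesis using iso Mvv that by (cases "x = v") auto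
    qed
    then show ?thesis unfolding KS_def delta_def using vT by auto
  qed
  have sub: "KS M ?T \<subseteq> KS M T"
  proof
    fix g assume g: "g \<in> KS M ?T"
    have gv: "g v = 0" using g unfolding KS_def by auto
    have "(\<Sum>y\<in>T. M x y * g y) = 0" if "x \<in> T" for x
    proof -
      have "(\<Sum>y\<in>T. M x y * g y) = M x v * g v + (\<Sum>y\<in>?T. M x y * g y)"
        by (rule sum_split1[OF fin vT])
      also have "\<dots> = (\<Sum>y\<in>?T. M x y * g y)" using gv by simp
      finally have eq: "(\<Sum>y\<in>T. M x y * g y) = (\<Sum>y\<in>?T. M x y * g y)" .
      show ?thesis
      proof (cases "x = v")
        case True
        have "(\<Sum>y\<in>?T. M x y * g y) = 0" using iso True by (intro sum.neutral) auto
        then show ?thesis using eq by simp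
      next
        case False
        then show ?thesis using eq g that unfolding KS_def by auto
      qed
    qed
    then show "g \<in> KS M T" using g unfolding KS_def by auto
  qed
  have Bsub: "insert (delta v) B \<subseteq> KS M T" using dK sub B(1) by auto
  have span: "KS M T \<subseteq> fs.span (insert (delta v) B)"
  proof
    fix g assume g: "g \<in> KS M T"
    define h where "h = (\<lambda>x. if x = v then 0 else g x)"
    have "h \<in> KS M ?T"
    proof -
      have "(\<Sum>y\<in>?T. M x y * h y) = 0" if "x \<in> ?T" for x
      proof -
        have "(\<Sum>y\<in>?T. M x y * h y) = (\<Sum>y\<in>?T. M x y * g y)"
          unfolding h_def by (intro sum.cong) auto
        also have "\<dots> = (\<Sum>y\<in>T. M x y * g y) - M x v * g v"
          using sum_split1[OF fin vT, of "\<lambda>y. M x y * g y"] by simp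
        also have "\<dots> = 0" using g that iso unfolding KS_def by auto
        finally show ?thesis .
      qed
      then show ?thesis using g unfolding KS_def h_def by auto
    qed
    then have "h \<in> fs.span (insert (delta v) B)" using spB fs.span_mono[of B "insert (delta v) B"] by auto
    moreover have "delta v \<in> fs.span (insert (delta v) B)" by (rule fs.span_base) simp
    ultimately have "h + (\<lambda>x. g v * delta v x) \<in> fs.span (insert (delta v) B)"
      by (intro fs.span_add fs.span_scale)
    moreover have "h + (\<lambda>x. g v * delta v x) = g" unfolding h_def delta_def by (auto simp: fun_eq_iff)
    ultimately show "g \<in> fs.span (insert (delta v) B)" by simp
  qed
  have "card (insert (delta v) B) = fs.dim (KS M T)"
    using fs.basis_card_eq_dim[OF Bsub span ind] .
  moreover have "card (insert (delta v) B) = card B + 1"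
    using B(5) dnot fs.span_base[of _ B] by (subst card_insert_disjoint) auto
  ultimately show ?thesis unfolding dK_def using B(4) by simp
qed


lemma fs_linearI:
  assumes "\<And>x y. L (x + y) = L x + L y" "\<And>c x. L (\<lambda>z. c * x z) = (\<lambda>z. c * L x z)"
  shows "Vector_Spaces.linear (\<lambda>(c::real) (g::nat \<Rightarrow> real). (\<lambda>x. c * g x)) (\<lambda>(c::real) (g::nat \<Rightarrow> real). (\<lambda>x. c * g x)) L"
  unfolding Vector_Spaces.linear_iff using assms fs.vector_space_axioms by auto

lemma K2:
  assumes fin: "finite T" and uT: "u \<in> T" and vT: "v \<in> T" and uv: "u \<noteq> v"
    and Mvv: "M v v = 0" and Mvu: "M v u \<noteq> 0" and Muv: "M u v \<noteq> 0"
    and iso: "\<forall>y\<in>T. y \<notin> {u,v} \<longrightarrow> M v y = 0 \<and> M y v = 0"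
  shows "dK M T = dK M (T - {u,v})"
proof -
  let ?R = "T - {u,v}"
  define L where "L = (\<lambda>g::nat\<Rightarrow>real. (\<lambda>x. if x \<in> ?R then g x else 0))"
  have lin: "Vector_Spaces.linear (\<lambda>(c::real) (g::nat \<Rightarrow> real). (\<lambda>x. c * g x)) (\<lambda>(c::real) (g::nat \<Rightarrow> real). (\<lambda>x. c * g x)) L"
    by (rule fs_linearI) (auto simp: L_def fun_eq_iff)
  have split: "\<And>F. sum F T = F u + F v + sum F ?R" using sum_split2[OF fin uT vT uv] by blast
  have zero_v: "(\<Sum>y\<in>?R. M v y * g y) = 0" for g
    using iso by (intro sum.neutral) auto
  have gu: "g u = 0" if g: "g \<in> KS M T" for g
  proof -
    have "0 = (\<Sum>y\<in>T. M v y * g y)" using g vT unfolding KS_def by auto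
    also have "\<dots> = M v u * g u" using split[of "\<lambda>y. M v y * g y"] zero_v[of g] Mvv by simp
    finally show ?thesis using Mvu by simp
  qed
  have into: "L g \<in> KS M ?R" if g: "g \<in> KS M T" for g
  proof -
    have "(\<Sum>y\<in>?R. M x y * L g y) = 0" if x: "x \<in> ?R" for x
    proof -
      have "(\<Sum>y\<in>?R. M x y * L g y) = (\<Sum>y\<in>?R. M x y * g y)"
        unfolding L_def by (intro sum.cong) auto
      also have "\<dots> = (\<Sum>y\<in>T. M x y * g y) - M x u * g u - M x v * g v"
        using split[of "\<lambda>y. M x y * g y"] by simp
      also have "\<dots> = 0" using g x gu[OF g] iso unfolding KS_def by auto
      finally show ?thesis .
    qed
    then show ?thesis unfolding KS_def L_def by auto
  qed
  have inj: "inj_on L (KS M T)"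
    unfolding fsp.linear_inj_on_iff_eq_0[OF lin KS_subspace]
  proof (intro ballI impI)
    fix g assume g: "g \<in> KS M T" and Lg: "L g = 0"
    have gR: "g y = 0" if "y \<in> ?R" for y
      using fun_cong[OF Lg, of y] that unfolding L_def by auto
    have "(\<Sum>y\<in>?R. M u y * g y) = 0" using gR by (intro sum.neutral) auto
    moreover have "0 = (\<Sum>y\<in>T. M u y * g y)" using g uT unfolding KS_def by auto
    ultimately have "M u v * g v = 0" using split[of "\<lambda>y. M u y * g y"] gu[OF g] by simp
    then have gv: "g v = 0" using Muv by simp
    show "g = 0"
    proof
      fix x show "g x = 0 x"
        using gR gv gu[OF g] g unfolding KS_def by (cases "x \<in> T"; cases "x = u"; cases "x = v") auto
    qed
  qed
  have surj: "L ` KS M T = KS M ?R"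
  proof
    show "L ` KS M T \<subseteq> KS M ?R" using into by auto
  next
    show "KS M ?R \<subseteq> L ` KS M T"
    proof
      fix h assume h: "h \<in> KS M ?R"
      have hu: "h u = 0" "h v = 0" using h unfolding KS_def by auto
      define c where "c = - (\<Sum>y\<in>?R. M u y * h y) / M u v"
      define g where "g = (\<lambda>x. if x = v then c else h x)"
      have sR: "(\<Sum>y\<in>?R. M x y * g y) = (\<Sum>y\<in>?R. M x y * h y)" for x
        unfolding g_def by (intro sum.cong) auto
      have "(\<Sum>y\<in>T. M x y * g y) = 0" if x: "x \<in> T" for x
      proof -
        have eq: "(\<Sum>y\<in>T. M x y * g y) = M x v * c + (\<Sum>y\<in>?R. M x y * h y)"
          using split[of "\<lambda>y. M x y * g y"] sR[of x] hu uv unfolding g_def by simp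
        show ?thesis
        proof (cases "x = v")
          case True then show ?thesis using eq Mvv zero_v[of h] by simp
        next
          case False note xv = this
          show ?thesis
          proof (cases "x = u")
            case True then show ?thesis using eq Muv unfolding c_def by simp
          next
            case False
            then have "x \<in> ?R" using x xv by auto
            then show ?thesis using eq iso h unfolding KS_def by auto
          qed
        qed
      qed
      moreover have "g x = 0" if "x \<notin> T" for x
        using that vT h unfolding g_def KS_def by auto
      ultimately have gK: "g \<in> KS M T" unfolding KS_def by auto
      have "L g = h"
      proof
        fix x show "L g x = h x"
          using h hu unfolding L_def g_def KS_def by auto
      qed
      then show "h \<in> L ` KS M T" using gK by blast
    qed
  qed
  have "fs.dim (KS M ?R) = fs.dim (KS M T)"
    by (rule dim_iso[OF fin KS_supp KS_subspace lin inj surj])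
  then show ?thesis unfolding dK_def by simp
qed


lemma K3:
  assumes fin: "finite T" and uT: "u \<in> T" and vT: "v \<in> T" and uv: "u \<noteq> v"
    and Mvv: "M v v \<noteq> 0"
    and iso: "\<forall>y\<in>T. y \<notin> {u,v} \<longrightarrow> M v y = 0 \<and> M y v = 0"
    and M'_def: "M' = (\<lambda>x y. if x = u \<and> y = u then M u u - M u v * M v u / M v v else M x y)"
  shows "dK M T = dK M' (T - {v})"
proof -
  let ?R = "T - {v}"
  let ?Q = "T - {u,v}"
  define L where "L = (\<lambda>g::nat\<Rightarrow>real. (\<lambda>x. if x = v then 0 else g x))"
  have lin: "Vector_Spaces.linear (\<lambda>(c::real) (g::nat \<Rightarrow> real). (\<lambda>x. c * g x)) (\<lambda>(c::real) (g::nat \<Rightarrow> real). (\<lambda>x. c * g x)) L"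
    by (rule fs_linearI) (auto simp: L_def fun_eq_iff)
  have split: "\<And>F. sum F T = F u + F v + sum F ?Q" using sum_split2[OF fin uT vT uv] by blast
  have uR: "u \<in> ?R" using uT uv by blast
  have split1: "\<And>F. sum F ?R = F u + sum F ?Q"
  proof -
    fix F
    have "sum F ?R = F u + sum F (?R - {u})" using fin uR by (intro sum.remove) auto
    moreover have "?R - {u} = ?Q" by auto
    ultimately show "sum F ?R = F u + sum F ?Q" by simp
  qed
  have zero_v: "(\<Sum>y\<in>?Q. M v y * g y) = 0" for g
    using iso by (intro sum.neutral) auto
  have M'R0: "(\<Sum>y\<in>?Q. M' x y * g y) = (\<Sum>y\<in>?Q. M x y * g y)" for x g
    unfolding M'_def by (intro sum.cong) auto
  have gv: "g v = - M v u * g u / M v v" if g: "g \<in> KS M T" for g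
  proof -
    have "0 = (\<Sum>y\<in>T. M v y * g y)" using g vT unfolding KS_def by auto
    also have "\<dots> = M v u * g u + M v v * g v" using split[of "\<lambda>y. M v y * g y"] zero_v[of g] by simp
    finally show ?thesis using Mvv by (simp add: field_simps)
  qed
  have into: "L g \<in> KS M' ?R" if g: "g \<in> KS M T" for g
  proof -
    have "(\<Sum>y\<in>?R. M' x y * L g y) = 0" if x: "x \<in> ?R" for x
    proof -
      have "(\<Sum>y\<in>?R. M' x y * L g y) = (\<Sum>y\<in>?R. M' x y * g y)"
        unfolding L_def by (intro sum.cong) auto
      also have "\<dots> = M' x u * g u + (\<Sum>y\<in>?Q. M x y * g y)"
        using split1[of "\<lambda>y. M' x y * g y"] M'R0 by simp
      also have "\<dots> = 0"
      proof (cases "x = u")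
        case True
        have "0 = (\<Sum>y\<in>T. M u y * g y)" using g uT unfolding KS_def by auto
        also have "\<dots> = M u u * g u + M u v * g v + (\<Sum>y\<in>?Q. M u y * g y)"
          using split[of "\<lambda>y. M u y * g y"] by simp
        finally have e: "M u u * g u + M u v * g v + (\<Sum>y\<in>?Q. M u y * g y) = 0" by simp
        have "M' x u * g u = M u u * g u - (M u v * M v u / M v v) * g u"
          using True unfolding M'_def by (simp add: algebra_simps)
        also have "\<dots> = M u u * g u + M u v * g v"
          unfolding gv[OF g] by (simp add: algebra_simps)
        finally have "M' x u * g u = M u u * g u + M u v * g v" .
        then show ?thesis using e True by simp
      next
        case False
        then have xR0: "x \<in> ?Q" using x by auto
        have "0 = (\<Sum>y\<in>T. M x y * g y)" using g x unfolding KS_def by auto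
        also have "\<dots> = M x u * g u + M x v * g v + (\<Sum>y\<in>?Q. M x y * g y)"
          using split[of "\<lambda>y. M x y * g y"] by simp
        also have "M x v = 0" using iso xR0 by auto
        finally show ?thesis using False unfolding M'_def by simp
      qed
      finally show ?thesis .
    qed
    then show ?thesis using g unfolding KS_def L_def by auto
  qed
  have inj: "inj_on L (KS M T)"
    unfolding fsp.linear_inj_on_iff_eq_0[OF lin KS_subspace]
  proof (intro ballI impI)
    fix g assume g: "g \<in> KS M T" and Lg: "L g = 0"
    have gR: "g y = 0" if "y \<noteq> v" for y
      using fun_cong[OF Lg, of y] that unfolding L_def by auto
    then have "g v = 0" using gv[OF g] uv by simp
    then have g0: "g v = 0" .
    show "g = 0"
    proof
      fix x show "g x = 0 x" using gR g0 by (cases "x = v") auto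
    qed
  qed
  have surj: "L ` KS M T = KS M' ?R"
  proof
    show "L ` KS M T \<subseteq> KS M' ?R" using into by auto
  next
    show "KS M' ?R \<subseteq> L ` KS M T"
    proof
      fix h assume h: "h \<in> KS M' ?R"
      have hv: "h v = 0" using h unfolding KS_def by auto
      define c where "c = - M v u * h u / M v v"
      define g where "g = (\<lambda>x. if x = v then c else h x)"
      have sR0: "(\<Sum>y\<in>?Q. M x y * g y) = (\<Sum>y\<in>?Q. M x y * h y)" for x
        unfolding g_def by (intro sum.cong) auto
      have hR: "(\<Sum>y\<in>?R. M' x y * h y) = 0" if "x \<in> ?R" for x
        using h that unfolding KS_def by auto
      have "(\<Sum>y\<in>T. M x y * g y) = 0" if x: "x \<in> T" for x
      proof -
        have eq: "(\<Sum>y\<in>T. M x y * g y) = M x u * h u + M x v * c + (\<Sum>y\<in>?Q. M x y * h y)"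
          using split[of "\<lambda>y. M x y * g y"] sR0[of x] uv unfolding g_def by simp
        show ?thesis
        proof (cases "x = v")
          case True then show ?thesis using eq Mvv zero_v[of h] unfolding c_def by (simp add: field_simps)
        next
          case False note xv = this
          have hx: "M' x u * h u + (\<Sum>y\<in>?Q. M x y * h y) = 0"
            using hR[of x] x xv split1[of "\<lambda>y. M' x y * h y"] M'R0[of x h] by simp
          show ?thesis
          proof (cases "x = u")
            case True
            have "M x u * h u + M x v * c = M' x u * h u"
              using True Mvv unfolding M'_def c_def by (simp add: field_simps)
            then show ?thesis using eq hx by simp
          next
            case False
            then have "x \<in> ?Q" using x xv by auto
            then have "M x v = 0" using iso by auto
            moreover have "M' x u = M x u" using False unfolding M'_def by simp
            ultimately show ?thesis using eq hx by simp
          qed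
        qed
      qed
      moreover have "g x = 0" if "x \<notin> T" for x
        using that vT h unfolding g_def KS_def by auto
      ultimately have gK: "g \<in> KS M T" unfolding KS_def by auto
      have "L g = h"
      proof
        fix x show "L g x = h x"
          using hv unfolding L_def g_def by auto
      qed
      then show "h \<in> L ` KS M T" using gK by blast
    qed
  qed
  have "fs.dim (KS M' ?R) = fs.dim (KS M T)"
    by (rule dim_iso[OF fin KS_supp KS_subspace lin inj surj])
  then show ?thesis unfolding dK_def by simp
qed


definition adjS :: "(nat \<Rightarrow> nat \<Rightarrow> real) \<Rightarrow> nat set \<Rightarrow> nat \<Rightarrow> nat \<Rightarrow> bool" where
  "adjS M S x y \<longleftrightarrow> x \<in> S \<and> y \<in> S \<and> x \<noteq> y \<and> M x y \<noteq> 0"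

definition symS :: "(nat \<Rightarrow> nat \<Rightarrow> real) \<Rightarrow> nat set \<Rightarrow> bool" where
  "symS M S \<longleftrightarrow> (\<forall>x\<in>S. \<forall>y\<in>S. M x y = M y x)"

definition cycS :: "(nat \<Rightarrow> nat \<Rightarrow> real) \<Rightarrow> nat set \<Rightarrow> bool" where
  "cycS M S \<longleftrightarrow> (\<exists>vs. length vs \<ge> 3 \<and> distinct vs \<and>
      (\<forall>i < length vs. adjS M S (vs ! i) (vs ! ((i + 1) mod length vs))))"

lemma adjS_sym: "symS M S \<Longrightarrow> adjS M S x y \<Longrightarrow> adjS M S y x"
  unfolding symS_def adjS_def by auto

lemma adjS_mono: "S' \<subseteq> S \<Longrightarrow> adjS M S' x y \<Longrightarrow> adjS M S x y"
  unfolding adjS_def by auto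

lemma cycS_mono: "S' \<subseteq> S \<Longrightarrow> cycS M S' \<Longrightarrow> cycS M S"
  unfolding cycS_def using adjS_mono by metis

lemma symS_mono: "S' \<subseteq> S \<Longrightarrow> symS M S \<Longrightarrow> symS M S'"
  unfolding symS_def by auto

definition pathS :: "(nat \<Rightarrow> nat \<Rightarrow> real) \<Rightarrow> nat set \<Rightarrow> nat list \<Rightarrow> bool" where
  "pathS M S p \<longleftrightarrow> p \<noteq> [] \<and> distinct p \<and> set p \<subseteq> S \<and>
     (\<forall>i. Suc i < length p \<longrightarrow> adjS M S (p ! i) (p ! Suc i))"

lemma leaf_exists:
  assumes fin: "finite S" and ne: "S \<noteq> {}" and sym: "symS M S" and nc: "\<not> cycS M S"
  shows "\<exists>v\<in>S. (\<forall>y. \<not> adjS M S v y) \<or> (\<exists>u. adjS M S v u \<and> (\<forall>y. adjS M S v y \<longrightarrow> y = u))"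
proof -
  obtain x where x: "x \<in> S" using ne by auto
  let ?P = "\<lambda>k. \<exists>p. pathS M S p \<and> length p = k"
  have P1: "?P 1" using x by (intro exI[of _ "[x]"]) (auto simp: pathS_def)
  have bound: "\<forall>k. ?P k \<longrightarrow> k \<le> card S"
  proof (intro allI impI)
    fix k assume "?P k"
    then obtain p where p: "pathS M S p" "length p = k" by auto
    have "card (set p) = length p" using p distinct_card unfolding pathS_def by auto
    moreover have "card (set p) \<le> card S" using p fin card_mono unfolding pathS_def by auto
    ultimately show "k \<le> card S" using p by simp
  qed
  obtain k where k: "?P k" "\<forall>k'. ?P k' \<longrightarrow> k' \<le> k"
    using Nat.ex_has_greatest_nat[of ?P 1 "card S"] P1 bound by blast
  then obtain p where p: "pathS M S p" "length p = k" by auto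
  have pne: "p \<noteq> []" and pd: "distinct p" and pS: "set p \<subseteq> S"
    and padj: "\<And>i. Suc i < length p \<Longrightarrow> adjS M S (p ! i) (p ! Suc i)"
    using p(1) unfolding pathS_def by auto
  define x0 where "x0 = p ! 0"
  have x0S: "x0 \<in> S" using pne pS unfolding x0_def by (auto simp: nth_mem subset_iff)
  have nb_in: "w \<in> set p" if w: "adjS M S x0 w" for w
  proof (rule ccontr)
    assume wn: "w \<notin> set p"
    have "pathS M S (w # p)"
      unfolding pathS_def
    proof (intro conjI allI impI)
      show "w # p \<noteq> []" by simp
      show "distinct (w # p)" using wn pd by simp
      show "set (w # p) \<subseteq> S" using pS w unfolding adjS_def by auto
    next
      fix i assume i: "Suc i < length (w # p)"
      show "adjS M S ((w # p) ! i) ((w # p) ! Suc i)"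
      proof (cases i)
        case 0
        then show ?thesis using adjS_sym[OF sym w] unfolding x0_def by simp
      next
        case (Suc j)
        then show ?thesis using padj[of j] i by simp
      qed
    qed
    then have "?P (Suc k)" using p(2) by (intro exI[of _ "w # p"]) simp
    then show False using k(2) by fastforce
  qed
  show ?thesis
  proof (cases "\<exists>w. adjS M S x0 w")
    case False
    then show ?thesis using x0S by blast
  next
    case True
    then obtain w0 where w0: "adjS M S x0 w0" by auto
    have w0p: "w0 \<in> set p" using nb_in[OF w0] .
    then obtain j0 where j0: "j0 < length p" "p ! j0 = w0" by (auto simp: in_set_conv_nth)
    have "j0 \<noteq> 0" using j0 w0 unfolding x0_def adjS_def by (metis)
    then have len2: "Suc 0 < length p" using j0 by simp
    define u where "u = p ! 1"
    have x0u: "adjS M S x0 u" using padj[OF len2] unfolding x0_def u_def by simp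
    have uniq: "y = u" if y: "adjS M S x0 y" for y
    proof -
      have "y \<in> set p" using nb_in[OF y] .
      then obtain j where j: "j < length p" "p ! j = y" by (auto simp: in_set_conv_nth)
      have jn0: "j \<noteq> 0" using j y unfolding x0_def adjS_def by metis
      show ?thesis
      proof (cases "j = 1")
        case True then show ?thesis using j unfolding u_def by simp
      next
        case False
        then have j2: "j \<ge> 2" using jn0 by simp
        define vs where "vs = take (Suc j) p"
        have lvs: "length vs = Suc j" using j unfolding vs_def by simp
        have "cycS M S"
          unfolding cycS_def
        proof (intro exI[of _ vs] conjI allI impI)
          show "3 \<le> length vs" using lvs j2 by simp
          show "distinct vs" using pd unfolding vs_def by simp
        next
          fix i assume i: "i < length vs"
          show "adjS M S (vs ! i) (vs ! ((i + 1) mod length vs))"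
          proof (cases "i = j")
            case True
            have "(i + 1) mod length vs = 0" using True lvs by simp
            moreover have "vs ! i = y" using True j unfolding vs_def by simp
            moreover have "vs ! 0 = x0" unfolding vs_def x0_def by simp
            ultimately show ?thesis using adjS_sym[OF sym y] by simp
          next
            case False
            then have ij: "i < j" using i lvs by simp
            then have "(i + 1) mod length vs = Suc i" using lvs by simp
            moreover have "vs ! i = p ! i" "vs ! Suc i = p ! Suc i" using ij unfolding vs_def by simp_all
            ultimately show ?thesis using padj[of i] ij j by simp
          qed
        qed
        then show ?thesis using nc by simp
      qed
    qed
    show ?thesis using x0S x0u uniq by blast
  qed
qed


definition edgesS :: "(nat \<Rightarrow> nat \<Rightarrow> real) \<Rightarrow> nat set \<Rightarrow> nat set set" where
  "edgesS M S = {{x, y} | x y. adjS M S x y}"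

definition compR :: "(nat \<Rightarrow> nat \<Rightarrow> real) \<Rightarrow> nat set \<Rightarrow> (nat \<times> nat) set" where
  "compR M S = {(i, j). i \<in> S \<and> j \<in> S \<and> (adjS M S)\<^sup>*\<^sup>* i j}"

definition ncomp :: "(nat \<Rightarrow> nat \<Rightarrow> real) \<Rightarrow> nat set \<Rightarrow> nat" where
  "ncomp M S = card (S // compR M S)"

lemma rtranclp_symI:
  assumes "\<And>a b. r a b \<Longrightarrow> r b a" and "r\<^sup>*\<^sup>* x y"
  shows "r\<^sup>*\<^sup>* y x"
  using assms(2)
proof (induction rule: rtranclp_induct)
  case base then show ?case by simp
next
  case (step y z)
  then show ?case using assms(1) converse_rtranclp_into_rtranclp by metis
qed

lemma PL:
  assumes sym: "symS M S" and vS: "v \<in> S" and H: "\<forall>y. adjS M S v y \<longrightarrow> y = u"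
    and r: "(adjS M S)\<^sup>*\<^sup>* x y" and xv: "x \<noteq> v"
  shows "(y \<noteq> v \<longrightarrow> (adjS M (S - {v}))\<^sup>*\<^sup>* x y) \<and> (y = v \<longrightarrow> adjS M S u v \<and> (adjS M (S - {v}))\<^sup>*\<^sup>* x u)"
  using r
proof (induction rule: rtranclp_induct)
  case base then show ?case using xv by simp
next
  case (step y z)
  show ?case
  proof (cases "z = v")
    case True
    then have yv: "y \<noteq> v" using step(2) unfolding adjS_def by auto
    have "adjS M S v y" using adjS_sym[OF sym step(2)] True by simp
    then have "y = u" using H by simp
    then show ?thesis using step True yv adjS_sym[OF sym step(2)] by auto
  next
    case False
    show ?thesis
    proof (cases "y = v")
      case True
      then have "z = u" using H step(2) by simp
      then show ?thesis using step True False by auto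
    next
      case yv: False
      have "adjS M (S - {v}) y z" using step(2) yv False unfolding adjS_def by auto
      then show ?thesis using step yv False by (meson rtranclp.rtrancl_into_rtrancl)
    qed
  qed
qed

lemma rt_mono: "(adjS M (S - {v}))\<^sup>*\<^sup>* x y \<Longrightarrow> (adjS M S)\<^sup>*\<^sup>* x y"
  by (rule rtranclp_mono[THEN predicate2D, rotated]) (auto intro: adjS_mono)

lemma quotient_image: "A // r = (\<lambda>x. r `` {x}) ` A"
  unfolding quotient_def by auto

lemma class_eq: "x \<in> S \<Longrightarrow> compR M S `` {x} = {y. y \<in> S \<and> (adjS M S)\<^sup>*\<^sup>* x y}"
  unfolding compR_def by auto

lemma finite_edges: "finite S \<Longrightarrow> finite (edgesS M S)"
proof -
  assume "finite S"
  moreover have "edgesS M S \<subseteq> Pow S" unfolding edgesS_def adjS_def by auto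
  ultimately show ?thesis using finite_subset by blast
qed

lemma E_iso:
  assumes sym: "symS M S" and iso: "\<forall>y. \<not> adjS M S v y"
  shows "edgesS M S = edgesS M (S - {v})"
proof -
  have "adjS M S x y \<longleftrightarrow> adjS M (S - {v}) x y" for x y
    using iso adjS_sym[OF sym, of x y] unfolding adjS_def by auto
  then show ?thesis unfolding edgesS_def by simp
qed

lemma E_leaf:
  assumes sym: "symS M S" and vu: "adjS M S v u" and uniq: "\<forall>y. adjS M S v y \<longrightarrow> y = u"
  shows "edgesS M S = insert {u, v} (edgesS M (S - {v}))" "{u, v} \<notin> edgesS M (S - {v})"
proof -
  show "{u, v} \<notin> edgesS M (S - {v})"
    unfolding edgesS_def adjS_def by (auto simp: doubleton_eq_iff)
  show "edgesS M S = insert {u, v} (edgesS M (S - {v}))"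
  proof
    show "edgesS M S \<subseteq> insert {u, v} (edgesS M (S - {v}))"
    proof
      fix e assume "e \<in> edgesS M S"
      then obtain x y where e: "e = {x, y}" "adjS M S x y" unfolding edgesS_def by auto
      show "e \<in> insert {u, v} (edgesS M (S - {v}))"
      proof (cases "x = v \<or> y = v")
        case True
        then show ?thesis
        proof
          assume "x = v" then have "y = u" using uniq e by simp
          then show ?thesis using e \<open>x = v\<close> by auto
        next
          assume "y = v" then have "x = u" using uniq adjS_sym[OF sym e(2)] by simp
          then show ?thesis using e \<open>y = v\<close> by auto
        qed
      next
        case False
        then have "adjS M (S - {v}) x y" using e unfolding adjS_def by auto
        then show ?thesis using e unfolding edgesS_def by auto
      qed
    qed
  next
    have "{u, v} \<in> edgesS M S" using adjS_sym[OF sym vu] unfolding edgesS_def by auto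
    moreover have "edgesS M (S - {v}) \<subseteq> edgesS M S" unfolding edgesS_def using adjS_mono[of "S - {v}" S M] by blast
    ultimately show "insert {u, v} (edgesS M (S - {v})) \<subseteq> edgesS M S" by auto
  qed
qed

lemma C_iso:
  assumes fin: "finite S" and sym: "symS M S" and vS: "v \<in> S" and iso: "\<forall>y. \<not> adjS M S v y"
  shows "ncomp M S = ncomp M (S - {v}) + 1"
proof -
  let ?S' = "S - {v}"
  have H: "\<forall>y. adjS M S v y \<longrightarrow> y = v" using iso by simp
  have nov: "\<not> (adjS M S)\<^sup>*\<^sup>* x v" if "x \<noteq> v" for x
    using PL[OF sym vS H _ that, of v] unfolding adjS_def by auto
  have cv: "compR M S `` {v} = {v}"
  proof -
    have "y = v" if "(adjS M S)\<^sup>*\<^sup>* v y" for y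
      using nov[of y] rtranclp_symI[OF adjS_sym[OF sym] that] by auto
    then show ?thesis using class_eq[OF vS, of M] vS by auto
  qed
  have cx: "compR M S `` {x} = compR M ?S' `` {x}" if x: "x \<in> ?S'" for x
  proof -
    have "(adjS M S)\<^sup>*\<^sup>* x y \<longleftrightarrow> y \<noteq> v \<and> (adjS M ?S')\<^sup>*\<^sup>* x y" for y
      using PL[OF sym vS H _, of x y] nov[of x] x rt_mono[of M S v x y] by auto
    then show ?thesis using class_eq[of x S M] class_eq[of x ?S' M] x by auto
  qed
  have "S // compR M S = insert {v} (?S' // compR M ?S')"
  proof -
    have "S = insert v ?S'" using vS by auto
    then have "S // compR M S = insert (compR M S `` {v}) ((\<lambda>x. compR M S `` {x}) ` ?S')"
      unfolding quotient_image by (metis image_insert)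
    also have "(\<lambda>x. compR M S `` {x}) ` ?S' = ?S' // compR M ?S'"
      unfolding quotient_image using cx by (intro image_cong) auto
    finally show ?thesis using cv by simp
  qed
  moreover have "{v} \<notin> ?S' // compR M ?S'"
    unfolding quotient_image using class_eq[of _ ?S' M] by auto
  moreover have "finite (?S' // compR M ?S')" unfolding quotient_image using fin by simp
  ultimately show ?thesis unfolding ncomp_def by simp
qed

lemma C_leaf:
  assumes fin: "finite S" and sym: "symS M S" and vS: "v \<in> S"
    and vu: "adjS M S v u" and uniq: "\<forall>y. adjS M S v y \<longrightarrow> y = u"
  shows "ncomp M S = ncomp M (S - {v})"
proof -
  let ?S' = "S - {v}"
  have uS': "u \<in> ?S'" using vu unfolding adjS_def by auto
  have sym': "symS M ?S'" using symS_mono[OF _ sym] by auto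
  define g where "g = (\<lambda>X. if u \<in> X then insert v X else X)"
  have cx: "compR M S `` {x} = g (compR M ?S' `` {x})" if x: "x \<in> ?S'" for x
  proof -
    have a: "(adjS M S)\<^sup>*\<^sup>* x y \<longleftrightarrow> (adjS M ?S')\<^sup>*\<^sup>* x y" if "y \<noteq> v" for y
      using PL[OF sym vS uniq _, of x y] x that rt_mono[of M S v x y] by auto
    have b: "(adjS M S)\<^sup>*\<^sup>* x v \<longleftrightarrow> (adjS M ?S')\<^sup>*\<^sup>* x u"
    proof
      assume "(adjS M S)\<^sup>*\<^sup>* x v"
      then show "(adjS M ?S')\<^sup>*\<^sup>* x u" using PL[OF sym vS uniq _, of x v] x by auto
    next
      assume "(adjS M ?S')\<^sup>*\<^sup>* x u"
      then have "(adjS M S)\<^sup>*\<^sup>* x u" by (rule rt_mono)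
      then show "(adjS M S)\<^sup>*\<^sup>* x v" using adjS_sym[OF sym vu] by (meson rtranclp.rtrancl_into_rtrancl)
    qed
    have "y \<in> compR M S `` {x} \<longleftrightarrow> y \<in> g (compR M ?S' `` {x})" for y
        unfolding g_def class_eq[of x S M, OF DiffD1[OF x]] class_eq[OF x]
        using a[of y] b uS' vS by (cases "y = v") auto
    then show ?thesis by blast
  qed
  have cv: "compR M S `` {v} = g (compR M ?S' `` {u})"
  proof -
    have uin: "u \<in> compR M ?S' `` {u}" using uS' class_eq[OF uS', of M] by auto
    have "(adjS M S)\<^sup>*\<^sup>* v y \<longleftrightarrow> (adjS M ?S')\<^sup>*\<^sup>* u y" if y: "y \<in> ?S'" for y
    proof
      assume "(adjS M S)\<^sup>*\<^sup>* v y"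
      then have "(adjS M S)\<^sup>*\<^sup>* y v" using rtranclp_symI[of "adjS M S" v y] adjS_sym[OF sym] by blast
      then have "(adjS M ?S')\<^sup>*\<^sup>* y u" using PL[OF sym vS uniq _, of y v] y by auto
      then show "(adjS M ?S')\<^sup>*\<^sup>* u y" using rtranclp_symI[of "adjS M ?S'" y u] adjS_sym[OF sym'] by blast
    next
      assume "(adjS M ?S')\<^sup>*\<^sup>* u y"
      then have "(adjS M S)\<^sup>*\<^sup>* u y" by (rule rt_mono)
      then show "(adjS M S)\<^sup>*\<^sup>* v y" using vu by (meson converse_rtranclp_into_rtranclp)
    qed
    then show ?thesis
      unfolding g_def class_eq[OF vS, of M] class_eq[OF uS', of M] using uin uS' vS by auto
  qed
  have img: "S // compR M S = g ` (?S' // compR M ?S')"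
  proof -
    have "S = insert v ?S'" using vS by auto
    then have "S // compR M S = insert (compR M S `` {v}) ((\<lambda>x. compR M S `` {x}) ` ?S')"
      unfolding quotient_image by (metis image_insert)
    also have "(\<lambda>x. compR M S `` {x}) ` ?S' = g ` (?S' // compR M ?S')"
      unfolding quotient_image image_image using cx by (intro image_cong) auto
    finally have e: "S // compR M S = insert (compR M S `` {v}) (g ` (?S' // compR M ?S'))" .
    have "compR M S `` {v} \<in> g ` (?S' // compR M ?S')"
      unfolding cv quotient_image using uS' by auto
    then show ?thesis using e by (simp add: insert_absorb)
  qed
  have inj: "inj_on g (?S' // compR M ?S')"
  proof
    fix X Y assume X: "X \<in> ?S' // compR M ?S'" and Y: "Y \<in> ?S' // compR M ?S'" and e: "g X = g Y"
    have "v \<notin> X" "v \<notin> Y" using X Y unfolding quotient_image compR_def by auto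
    then show "X = Y" using e unfolding g_def by (auto split: if_splits simp: insert_ident)
  qed
  show ?thesis unfolding ncomp_def img using card_image[OF inj] by simp
qed

theorem forest_count:
  assumes "finite S" "symS M S" "\<not> cycS M S"
  shows "card (edgesS M S) + ncomp M S = card S"
  using assms
proof (induction "card S" arbitrary: S)
  case 0
  then have "S = {}" by simp
  then show ?case unfolding edgesS_def ncomp_def adjS_def by simp
next
  case (Suc n)
  then have ne: "S \<noteq> {}" by auto
  obtain v where vS: "v \<in> S" and vc: "(\<forall>y. \<not> adjS M S v y) \<or> (\<exists>u. adjS M S v u \<and> (\<forall>y. adjS M S v y \<longrightarrow> y = u))"
    using leaf_exists[OF Suc.prems(1) ne Suc.prems(2,3)] by blast
  let ?S' = "S - {v}"
  have cS': "card ?S' = n" using Suc.hyps(2) vS Suc.prems(1) by simp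
  have IH: "card (edgesS M ?S') + ncomp M ?S' = card ?S'"
    using Suc.hyps(1)[OF cS'[symmetric]] Suc.prems symS_mono[of ?S' S M] cycS_mono[of ?S' S M] by auto
  from vc show ?case
  proof
    assume iso: "\<forall>y. \<not> adjS M S v y"
    show ?thesis using IH E_iso[OF Suc.prems(2) iso] C_iso[OF Suc.prems(1,2) vS iso] cS' Suc.hyps(2) by simp
  next
    assume "\<exists>u. adjS M S v u \<and> (\<forall>y. adjS M S v y \<longrightarrow> y = u)"
    then obtain u where vu: "adjS M S v u" and uniq: "\<forall>y. adjS M S v y \<longrightarrow> y = u" by blast
    have "card (edgesS M S) = card (edgesS M ?S') + 1"
      using E_leaf[OF Suc.prems(2) vu uniq] finite_edges[of ?S' M] Suc.prems(1) by simp
    then show ?thesis using IH C_leaf[OF Suc.prems(1,2) vS vu uniq] cS' Suc.hyps(2) by simp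
  qed
qed


lemma K1_into:
  assumes fin: "finite T" and vT: "v \<in> T"
    and iso: "\<forall>y\<in>T. y \<noteq> v \<longrightarrow> M y v = 0" and g: "g \<in> KS M T"
  shows "(\<lambda>x. if x = v then 0 else g x) \<in> KS M (T - {v})"
proof -
  define h where "h = (\<lambda>x. if x = v then 0 else g x)"
  have "(\<Sum>y\<in>T - {v}. M x y * h y) = 0" if "x \<in> T - {v}" for x
  proof -
    have "(\<Sum>y\<in>T - {v}. M x y * h y) = (\<Sum>y\<in>T - {v}. M x y * g y)"
      unfolding h_def by (intro sum.cong) auto
    also have "\<dots> = (\<Sum>y\<in>T. M x y * g y) - M x v * g v"
      using sum_split1[OF fin vT, of "\<lambda>y. M x y * g y"] by simp
    also have "\<dots> = 0" using g that iso unfolding KS_def by auto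
    finally show ?thesis .
  qed
  then show ?thesis using g unfolding KS_def h_def by auto
qed

lemma K2_into:
  assumes fin: "finite T" and uT: "u \<in> T" and vT: "v \<in> T" and uv: "u \<noteq> v"
    and Mvv: "M v v = 0" and Mvu: "M v u \<noteq> 0"
    and iso: "\<forall>y\<in>T. y \<notin> {u,v} \<longrightarrow> M v y = 0 \<and> M y v = 0"
    and g: "g \<in> KS M T"
  shows "g u = 0" "(\<lambda>x. if x \<in> T - {u,v} then g x else 0) \<in> KS M (T - {u,v})"
proof -
  let ?R = "T - {u,v}"
  have split: "\<And>F. sum F T = F u + F v + sum F ?R" using sum_split2[OF fin uT vT uv] by blast
  have zero_v: "(\<Sum>y\<in>?R. M v y * g y) = 0"
    using iso by (intro sum.neutral) auto
  have "0 = (\<Sum>y\<in>T. M v y * g y)" using g vT unfolding KS_def by auto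
  also have "\<dots> = M v u * g u" using split[of "\<lambda>y. M v y * g y"] zero_v Mvv by simp
  finally show gu: "g u = 0" using Mvu by simp
  have "(\<Sum>y\<in>?R. M x y * (if y \<in> ?R then g y else 0)) = 0" if x: "x \<in> ?R" for x
  proof -
    have "(\<Sum>y\<in>?R. M x y * (if y \<in> ?R then g y else 0)) = (\<Sum>y\<in>?R. M x y * g y)"
      by (intro sum.cong) auto
    also have "\<dots> = (\<Sum>y\<in>T. M x y * g y) - M x u * g u - M x v * g v"
      using split[of "\<lambda>y. M x y * g y"] by simp
    also have "\<dots> = 0" using g x gu iso unfolding KS_def by auto
    finally show ?thesis .
  qed
  then show "(\<lambda>x. if x \<in> ?R then g x else 0) \<in> KS M ?R" unfolding KS_def by auto
qed

lemma K3_into: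
  assumes fin: "finite T" and uT: "u \<in> T" and vT: "v \<in> T" and uv: "u \<noteq> v"
    and Mvv: "M v v \<noteq> 0"
    and iso: "\<forall>y\<in>T. y \<notin> {u,v} \<longrightarrow> M v y = 0 \<and> M y v = 0"
    and M'_def: "M' = (\<lambda>x y. if x = u \<and> y = u then M u u - M u v * M v u / M v v else M x y)"
    and g: "g \<in> KS M T"
  shows "(\<lambda>x. if x = v then 0 else g x) \<in> KS M' (T - {v})"
proof -
  let ?R = "T - {v}"
  let ?Q = "T - {u,v}"
  define L where "L = (\<lambda>g::nat\<Rightarrow>real. (\<lambda>x. if x = v then 0 else g x))"
  have split: "\<And>F. sum F T = F u + F v + sum F ?Q" using sum_split2[OF fin uT vT uv] by blast
  have uR: "u \<in> ?R" using uT uv by blast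
  have split1: "\<And>F. sum F ?R = F u + sum F ?Q"
  proof -
    fix F
    have "sum F ?R = F u + sum F (?R - {u})" using fin uR by (intro sum.remove) auto
    moreover have "?R - {u} = ?Q" by auto
    ultimately show "sum F ?R = F u + sum F ?Q" by simp
  qed
  have zero_v: "(\<Sum>y\<in>?Q. M v y * g y) = 0" for g
    using iso by (intro sum.neutral) auto
  have M'R0: "(\<Sum>y\<in>?Q. M' x y * g y) = (\<Sum>y\<in>?Q. M x y * g y)" for x g
    unfolding M'_def by (intro sum.cong) auto
  have gv: "g v = - M v u * g u / M v v"
  proof -
    have "0 = (\<Sum>y\<in>T. M v y * g y)" using g vT unfolding KS_def by auto
    also have "\<dots> = M v u * g u + M v v * g v" using split[of "\<lambda>y. M v y * g y"] zero_v[of g] by simp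
    finally show ?thesis using Mvv by (simp add: field_simps)
  qed
  have "(\<Sum>y\<in>?R. M' x y * L g y) = 0" if x: "x \<in> ?R" for x
  proof -
    have "(\<Sum>y\<in>?R. M' x y * L g y) = (\<Sum>y\<in>?R. M' x y * g y)"
      unfolding L_def by (intro sum.cong) auto
    also have "\<dots> = M' x u * g u + (\<Sum>y\<in>?Q. M x y * g y)"
      using split1[of "\<lambda>y. M' x y * g y"] M'R0 by simp
    also have "\<dots> = 0"
    proof (cases "x = u")
      case True
      have "0 = (\<Sum>y\<in>T. M u y * g y)" using g uT unfolding KS_def by auto
      also have "\<dots> = M u u * g u + M u v * g v + (\<Sum>y\<in>?Q. M u y * g y)"
        using split[of "\<lambda>y. M u y * g y"] by simp
      finally have e: "M u u * g u + M u v * g v + (\<Sum>y\<in>?Q. M u y * g y) = 0" by simp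
      have "M' x u * g u = M u u * g u - (M u v * M v u / M v v) * g u"
        using True unfolding M'_def by (simp add: algebra_simps)
      also have "\<dots> = M u u * g u + M u v * g v"
        unfolding gv by (simp add: algebra_simps)
      finally have "M' x u * g u = M u u * g u + M u v * g v" .
      then show ?thesis using e True by simp
    next
      case False
      then have xR0: "x \<in> ?Q" using x by auto
      have "0 = (\<Sum>y\<in>T. M x y * g y)" using g x unfolding KS_def by auto
      also have "\<dots> = M x u * g u + M x v * g v + (\<Sum>y\<in>?Q. M x y * g y)"
        using split[of "\<lambda>y. M x y * g y"] by simp
      also have "M x v = 0" using iso xR0 by auto
      finally show ?thesis using False unfolding M'_def by simp
    qed
    finally show ?thesis .
  qed
  then show ?thesis using g unfolding KS_def L_def by auto
qed


definition FS :: "(nat \<Rightarrow> nat \<Rightarrow> real) \<Rightarrow> nat set \<Rightarrow> (nat \<Rightarrow> real) \<Rightarrow> nat set" where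
  "FS M S f = {x \<in> S. f x = 0 \<and> (\<forall>y. adjS M S x y \<longrightarrow> f y = 0)}"

definition eigS :: "(nat \<Rightarrow> nat \<Rightarrow> real) \<Rightarrow> nat set \<Rightarrow> (nat \<Rightarrow> real) \<Rightarrow> bool" where
  "eigS M S f \<longleftrightarrow> (\<forall>x\<in>S. (\<Sum>y\<in>S. M x y * f y) = 0)"

definition Res :: "(nat \<Rightarrow> nat \<Rightarrow> real) \<Rightarrow> nat set \<Rightarrow> (nat \<Rightarrow> real) \<Rightarrow> bool" where
  "Res M S f \<longleftrightarrow>
     int (dK M (S - FS M S f)) = int (card S) - 2 * int (card {x\<in>S. f x = 0}) + int (card (FS M S f))
        - int (card {e \<in> edgesS M S. \<forall>x\<in>e. f x \<noteq> 0})
     \<and> (\<forall>g\<in>KS M (S - FS M S f). \<forall>x\<in>S. f x = 0 \<longrightarrow> g x = 0)"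

lemma nonadj_zero:
  assumes "symS M S" "x \<in> S" "y \<in> S" "x \<noteq> y" "\<not> adjS M S x y"
  shows "M x y = 0" "M y x = 0"
  using assms unfolding adjS_def symS_def by auto

lemma KS_support: "g \<in> KS M T \<Longrightarrow> x \<notin> T \<Longrightarrow> g x = 0"
  unfolding KS_def by auto

lemma finite_FS: "finite S \<Longrightarrow> finite (FS M S f)"
  unfolding FS_def by auto

lemma case_iso:
  assumes fin: "finite S" and sym: "symS M S" and vS: "v \<in> S" and iso: "\<forall>y. \<not> adjS M S v y"
    and eig: "eigS M S f"
    and IH: "eigS M (S - {v}) f \<Longrightarrow> Res M (S - {v}) f"
  shows "Res M S f"
proof -
  let ?S' = "S - {v}"
  have nz: "M v y = 0 \<and> M y v = 0" if "y \<in> S" "y \<noteq> v" for y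
    using nonadj_zero[OF sym vS that(1) _ ] iso that by metis
  have eig': "eigS M ?S' f"
    unfolding eigS_def
  proof
    fix x assume x: "x \<in> ?S'"
    have "0 = (\<Sum>y\<in>S. M x y * f y)" using eig x unfolding eigS_def by auto
    also have "\<dots> = M x v * f v + (\<Sum>y\<in>?S'. M x y * f y)" by (rule sum_split1[OF fin vS])
    finally show "(\<Sum>y\<in>?S'. M x y * f y) = 0" using nz[of x] x by simp
  qed
  have R': "Res M ?S' f" by (rule IH[OF eig'])
  have adj': "adjS M S x y \<longleftrightarrow> adjS M ?S' x y" if "x \<in> ?S'" for x y
    using that iso adjS_sym[OF sym, of x y] unfolding adjS_def by auto
  have FS': "FS M ?S' f = FS M S f - {v}"
    unfolding FS_def using adj' by auto
  have E: "edgesS M S = edgesS M ?S'" by (rule E_iso[OF sym iso])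
  have cS: "card S = card ?S' + 1" using fin vS card_Diff1_less[OF fin vS] by (simp add: card_Diff_singleton)
  show ?thesis
  proof (cases "f v = 0")
    case True
    have vF: "v \<in> FS M S f" using True iso vS unfolding FS_def by auto
    have FSeq: "FS M S f = insert v (FS M ?S' f)" using FS' vF by auto
    have T: "S - FS M S f = ?S' - FS M ?S' f" using FSeq by auto
    have Z: "{x\<in>S. f x = 0} = insert v {x\<in>?S'. f x = 0}" using True vS by auto
    have cZ: "card {x\<in>S. f x = 0} = card {x\<in>?S'. f x = 0} + 1"
      unfolding Z using fin by simp
    have cF: "card (FS M S f) = card (FS M ?S' f) + 1"
      unfolding FSeq using finite_FS[of ?S' M f] fin unfolding FS_def by simp
    have van: "\<forall>g\<in>KS M (S - FS M S f). \<forall>x\<in>S. f x = 0 \<longrightarrow> g x = 0"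
    proof (intro ballI impI)
      fix g x assume g: "g \<in> KS M (S - FS M S f)" and x: "x \<in> S" and fx: "f x = 0"
      show "g x = 0"
      proof (cases "x = v")
        case True then show ?thesis using KS_support[OF g] vF by simp
      next
        case False then show ?thesis using R' g x fx T unfolding Res_def by auto
      qed
    qed
    show ?thesis using R' van unfolding Res_def T E cS cZ cF by simp
  next
    case False
    have Mvv: "M v v = 0"
    proof -
      have "0 = (\<Sum>y\<in>S. M v y * f y)" using eig vS unfolding eigS_def by auto
      also have "\<dots> = M v v * f v + (\<Sum>y\<in>?S'. M v y * f y)" by (rule sum_split1[OF fin vS])
      also have "(\<Sum>y\<in>?S'. M v y * f y) = 0" using nz by (intro sum.neutral) auto
      finally show ?thesis using False by simp
    qed
    have vF: "v \<notin> FS M S f" using False unfolding FS_def by auto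
    have FSeq: "FS M ?S' f = FS M S f" using FS' vF by auto
    let ?T = "S - FS M S f"
    have vT: "v \<in> ?T" using vS vF by auto
    have finT: "finite ?T" using fin by simp
    have TT: "?T - {v} = ?S' - FS M ?S' f" using FSeq by auto
    have dk: "dK M ?T = dK M (?T - {v}) + 1"
      by (rule K1[where M=M, OF finT vT Mvv]) (use nz in auto)
    have Z: "{x\<in>S. f x = 0} = {x\<in>?S'. f x = 0}" using False by auto
    have van: "\<forall>g\<in>KS M ?T. \<forall>x\<in>S. f x = 0 \<longrightarrow> g x = 0"
    proof (intro ballI impI)
      fix g x assume g: "g \<in> KS M ?T" and x: "x \<in> S" and fx: "f x = 0"
      have xv: "x \<noteq> v" using fx False by auto
      have "(\<lambda>y. if y = v then 0 else g y) \<in> KS M (?T - {v})"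
        by (rule K1_into[where M=M, OF finT vT _ g]) (use nz in auto)
      then have "(\<lambda>y. if y = v then 0 else g y) x = 0"
        using R' x xv fx unfolding Res_def TT by auto
      then show "g x = 0" using xv by simp
    qed
    have A: "int (dK M ?T) = int (dK M (?S' - FS M ?S' f)) + 1" using dk TT by simp
    have B: "int (dK M (?S' - FS M ?S' f)) = int (card ?S') - 2 * int (card {x\<in>?S'. f x = 0}) + int (card (FS M ?S' f))
        - int (card {e \<in> edgesS M ?S'. \<forall>x\<in>e. f x \<noteq> 0})" using R' unfolding Res_def by blast
    show ?thesis unfolding Res_def
    proof (rule conjI)
      show "int (dK M ?T) = int (card S) - 2 * int (card {x\<in>S. f x = 0}) + int (card (FS M S f))
        - int (card {e \<in> edgesS M S. \<forall>x\<in>e. f x \<noteq> 0})"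
        unfolding A B by (simp add: E cS Z FSeq)
    qed (rule van)
  qed
qed


lemma card_rm1: "finite S \<Longrightarrow> v \<in> S \<Longrightarrow> card S = card (S - {v}) + 1"
  using card_Diff1_less[of S v] by (simp add: card_Diff_singleton)

lemma leaf_basics:
  assumes fin: "finite S" and sym: "symS M S" and vS: "v \<in> S" and vu: "adjS M S v u"
    and uniq: "\<forall>y. adjS M S v y \<longrightarrow> y = u"
  shows "u \<in> S" "u \<noteq> v" "M v u \<noteq> 0" "M u v \<noteq> 0"
    "\<And>y. y \<in> S \<Longrightarrow> y \<notin> {u, v} \<Longrightarrow> M v y = 0 \<and> M y v = 0"
    "\<And>x y. x \<in> S - {v} \<Longrightarrow> adjS M S x y \<longleftrightarrow> adjS M (S - {v}) x y \<or> (y = v \<and> x = u)"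
proof -
  show uS: "u \<in> S" and uv: "u \<noteq> v" and "M v u \<noteq> 0" using vu unfolding adjS_def by auto
  show "M u v \<noteq> 0" using adjS_sym[OF sym vu] unfolding adjS_def by auto
  fix y assume y: "y \<in> S" "y \<notin> {u, v}"
  then have "\<not> adjS M S v y" using uniq by auto
  then show "M v y = 0 \<and> M y v = 0" using nonadj_zero[OF sym vS y(1)] y by auto
next
  fix x y assume x: "x \<in> S - {v}"
  show "adjS M S x y \<longleftrightarrow> adjS M (S - {v}) x y \<or> (y = v \<and> x = u)"
  proof
    assume a: "adjS M S x y"
    show "adjS M (S - {v}) x y \<or> (y = v \<and> x = u)"
    proof (cases "y = v")
      case True
      then have "adjS M S v x" using adjS_sym[OF sym a] by simp
      then show ?thesis using uniq True by simp
    next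
      case False
      then have "adjS M (S - {v}) x y" using a x unfolding adjS_def by simp
      then show ?thesis by simp
    qed
  next
    assume "adjS M (S - {v}) x y \<or> (y = v \<and> x = u)"
    then show "adjS M S x y"
    proof
      assume "adjS M (S - {v}) x y" then show ?thesis by (rule adjS_mono[rotated]) auto
    next
      assume "y = v \<and> x = u" then show ?thesis using adjS_sym[OF sym vu] by simp
    qed
  qed
qed

lemma case_leaf_z:
  assumes fin: "finite S" and sym: "symS M S" and vS: "v \<in> S" and vu: "adjS M S v u"
    and uniq: "\<forall>y. adjS M S v y \<longrightarrow> y = u"
    and eig: "eigS M S f" and fv: "f v = 0"
    and IH: "eigS M (S - {v}) f \<Longrightarrow> Res M (S - {v}) f"
  shows "Res M S f"
proof -
  let ?S' = "S - {v}"
  note lb = leaf_basics[OF fin sym vS vu uniq]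
  have eig': "eigS M ?S' f"
    unfolding eigS_def
  proof
    fix x assume x: "x \<in> ?S'"
    have "0 = (\<Sum>y\<in>S. M x y * f y)" using eig x unfolding eigS_def by auto
    also have "\<dots> = M x v * f v + (\<Sum>y\<in>?S'. M x y * f y)" by (rule sum_split1[OF fin vS])
    finally show "(\<Sum>y\<in>?S'. M x y * f y) = 0" using fv by simp
  qed
  have R': "Res M ?S' f" by (rule IH[OF eig'])
  have fu: "f u = 0"
  proof -
    have "0 = (\<Sum>y\<in>S. M v y * f y)" using eig vS unfolding eigS_def by auto
    also have "\<dots> = M v u * f u + M v v * f v + (\<Sum>y\<in>S - {u, v}. M v y * f y)"
      by (rule sum_split2[OF fin lb(1) vS lb(2)])
    also have "(\<Sum>y\<in>S - {u, v}. M v y * f y) = 0" using lb(5) by (intro sum.neutral) auto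
    finally show ?thesis using fv lb(3) by simp
  qed
  have vF: "v \<in> FS M S f" using fv fu uniq vS unfolding FS_def by auto
  have FSeq: "FS M S f = insert v (FS M ?S' f)"
  proof -
    have "x \<in> FS M S f \<longleftrightarrow> x \<in> FS M ?S' f" if "x \<in> ?S'" for x
      using lb(6)[OF that] fv that unfolding FS_def by auto
    then show ?thesis using vF unfolding FS_def by auto
  qed
  have T: "S - FS M S f = ?S' - FS M ?S' f" using FSeq by auto
  have Z: "{x\<in>S. f x = 0} = insert v {x\<in>?S'. f x = 0}" using fv vS by auto
  have cZ: "card {x\<in>S. f x = 0} = card {x\<in>?S'. f x = 0} + 1"
    unfolding Z using fin by simp
  have cF: "card (FS M S f) = card (FS M ?S' f) + 1"
    unfolding FSeq using finite_FS[of ?S' M f] fin unfolding FS_def by simp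
  have cS: "card S = card ?S' + 1" using card_rm1[OF fin vS] .
  have E: "{e \<in> edgesS M S. \<forall>x\<in>e. f x \<noteq> 0} = {e \<in> edgesS M ?S'. \<forall>x\<in>e. f x \<noteq> 0}"
    using E_leaf(1)[OF sym vu uniq] fv by auto
  have van: "\<forall>g\<in>KS M (S - FS M S f). \<forall>x\<in>S. f x = 0 \<longrightarrow> g x = 0"
  proof (intro ballI impI)
    fix g x assume g: "g \<in> KS M (S - FS M S f)" and x: "x \<in> S" and fx: "f x = 0"
    show "g x = 0"
    proof (cases "x = v")
      case True then show ?thesis using KS_support[OF g] vF by simp
    next
      case False then show ?thesis using R' g x fx T unfolding Res_def by auto
    qed
  qed
  show ?thesis using R' van unfolding Res_def T E cS cZ cF by simp
qed

lemma case_leaf_nz_z: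
  assumes fin: "finite S" and sym: "symS M S" and vS: "v \<in> S" and vu: "adjS M S v u"
    and uniq: "\<forall>y. adjS M S v y \<longrightarrow> y = u"
    and eig: "eigS M S f" and fv: "f v \<noteq> 0" and fu: "f u = 0"
    and IH: "eigS M (S - {u, v}) f \<Longrightarrow> Res M (S - {u, v}) f"
  shows "Res M S f"
proof -
  let ?Q = "S - {u, v}"
  note lb = leaf_basics[OF fin sym vS vu uniq]
  have uS: "u \<in> S" and uv: "u \<noteq> v" using lb by auto
  have split: "\<And>F. sum F S = F u + F v + sum F ?Q" using sum_split2[OF fin uS vS uv] by blast
  have Mvv: "M v v = 0"
  proof -
    have "0 = (\<Sum>y\<in>S. M v y * f y)" using eig vS unfolding eigS_def by auto
    also have "\<dots> = M v u * f u + M v v * f v + (\<Sum>y\<in>?Q. M v y * f y)" by (rule split)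
    also have "(\<Sum>y\<in>?Q. M v y * f y) = 0" using lb(5) by (intro sum.neutral) auto
    finally show ?thesis using fv fu by simp
  qed
  have eig'': "eigS M ?Q f"
    unfolding eigS_def
  proof
    fix x assume x: "x \<in> ?Q"
    have "0 = (\<Sum>y\<in>S. M x y * f y)" using eig x unfolding eigS_def by auto
    also have "\<dots> = M x u * f u + M x v * f v + (\<Sum>y\<in>?Q. M x y * f y)" by (rule split)
    finally show "(\<Sum>y\<in>?Q. M x y * f y) = 0" using fu lb(5)[of x] x by simp
  qed
  have R'': "Res M ?Q f" by (rule IH[OF eig''])
  have adjQ: "adjS M ?Q x y \<or> y = u" if x: "x \<in> ?Q" and a: "adjS M S x y" for x y
  proof -
    have xS': "x \<in> S - {v}" and xu: "x \<noteq> u" using x by auto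
    have "adjS M (S - {v}) x y" using lb(6)[OF xS', of y] a xu by blast
    then show ?thesis using xu x unfolding adjS_def by auto
  qed
  have uF: "u \<notin> FS M S f" using adjS_sym[OF sym vu] fv unfolding FS_def by auto
  have vF: "v \<notin> FS M S f" using fv unfolding FS_def by auto
  have FSeq: "FS M ?Q f = FS M S f"
  proof -
    have "x \<in> FS M S f \<longleftrightarrow> x \<in> FS M ?Q f" if x: "x \<in> ?Q" for x
    proof
      assume "x \<in> FS M S f"
      then have "f x = 0" "\<forall>y. adjS M S x y \<longrightarrow> f y = 0" unfolding FS_def by auto
      moreover have "\<forall>y. adjS M ?Q x y \<longrightarrow> adjS M S x y" using adjS_mono[of ?Q S M x] by blast
      ultimately show "x \<in> FS M ?Q f" using x unfolding FS_def by blast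
    next
      assume "x \<in> FS M ?Q f"
      then have "f x = 0" "\<forall>y. adjS M ?Q x y \<longrightarrow> f y = 0" unfolding FS_def by auto
      moreover have "\<forall>y. adjS M S x y \<longrightarrow> adjS M ?Q x y \<or> y = u" using adjQ[OF x] by blast
      ultimately show "x \<in> FS M S f" using x fu unfolding FS_def by blast
    qed
    moreover have "FS M ?Q f \<subseteq> ?Q" "FS M S f \<subseteq> S" unfolding FS_def by auto
    ultimately show ?thesis using uF vF by blast
  qed
  let ?T = "S - FS M S f"
  have uT: "u \<in> ?T" and vT: "v \<in> ?T" using uS vS uF vF by auto
  have finT: "finite ?T" using fin by simp
  have TT: "?T - {u, v} = ?Q - FS M ?Q f" using FSeq by auto
  have isoT: "\<forall>y\<in>?T. y \<notin> {u,v} \<longrightarrow> M v y = 0 \<and> M y v = 0" using lb(5) by auto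
  have dk: "dK M ?T = dK M (?T - {u, v})"
    by (rule K2[OF finT uT vT uv Mvv lb(3) lb(4) isoT])
  have cS: "card S = card ?Q + 2"
  proof -
    have "card S = card (S - {u}) + 1" using card_rm1[OF fin uS] .
    moreover have "card (S - {u}) = card (S - {u} - {v}) + 1" using card_rm1[of "S - {u}" v] fin vS uv by simp
    moreover have "S - {u} - {v} = ?Q" by auto
    ultimately show ?thesis by simp
  qed
  have Z: "{x\<in>S. f x = 0} = insert u {x\<in>?Q. f x = 0}" using fu uS fv by auto
  have cZ: "card {x\<in>S. f x = 0} = card {x\<in>?Q. f x = 0} + 1"
    unfolding Z using fin by simp
  have E: "{e \<in> edgesS M S. \<forall>x\<in>e. f x \<noteq> 0} = {e \<in> edgesS M ?Q. \<forall>x\<in>e. f x \<noteq> 0}"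
  proof
    show "{e \<in> edgesS M S. \<forall>x\<in>e. f x \<noteq> 0} \<subseteq> {e \<in> edgesS M ?Q. \<forall>x\<in>e. f x \<noteq> 0}"
    proof
      fix e assume e: "e \<in> {e \<in> edgesS M S. \<forall>x\<in>e. f x \<noteq> 0}"
      then obtain x y where xy: "e = {x, y}" "adjS M S x y" unfolding edgesS_def by auto
      have xu: "x \<noteq> u" "y \<noteq> u" using e xy fu by auto
      have "x \<noteq> v" using xy uniq xu by auto
      moreover have "y \<noteq> v" using xy uniq xu adjS_sym[OF sym xy(2)] by auto
      ultimately have "adjS M ?Q x y" using xy xu unfolding adjS_def by auto
      then show "e \<in> {e \<in> edgesS M ?Q. \<forall>x\<in>e. f x \<noteq> 0}" using e xy unfolding edgesS_def by auto
    qed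
  next
    show "{e \<in> edgesS M ?Q. \<forall>x\<in>e. f x \<noteq> 0} \<subseteq> {e \<in> edgesS M S. \<forall>x\<in>e. f x \<noteq> 0}"
      unfolding edgesS_def using adjS_mono[of ?Q S M] by blast
  qed
  have van: "\<forall>g\<in>KS M ?T. \<forall>x\<in>S. f x = 0 \<longrightarrow> g x = 0"
  proof (intro ballI impI)
    fix g x assume g: "g \<in> KS M ?T" and x: "x \<in> S" and fx: "f x = 0"
    note into = K2_into[OF finT uT vT uv Mvv lb(3) isoT g]
    show "g x = 0"
    proof (cases "x = u")
      case True then show ?thesis using into(1) by simp
    next
      case False
      have xv: "x \<noteq> v" using fx fv by auto
      have vQ: "\<forall>g\<in>KS M (?Q - FS M ?Q f). \<forall>x\<in>?Q. f x = 0 \<longrightarrow> g x = 0"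
        using R'' unfolding Res_def by blast
      have xQ: "x \<in> ?Q" using x xv False by blast
      have inQ: "(\<lambda>y. if y \<in> ?T - {u, v} then g y else 0) \<in> KS M (?Q - FS M ?Q f)"
        using into(2) unfolding TT .
      have "\<forall>x\<in>?Q. f x = 0 \<longrightarrow> (\<lambda>y. if y \<in> ?T - {u, v} then g y else 0) x = 0"
        using vQ inQ by (rule bspec)
      then have "(\<lambda>y. if y \<in> ?T - {u, v} then g y else 0) x = 0"
        using xQ fx by blast
      then show "g x = 0" using KS_support[OF g] False xv by (cases "x \<in> ?T") auto
    qed
  qed
  have A: "int (dK M ?T) = int (dK M (?Q - FS M ?Q f))" using dk TT by simp
  have B: "int (dK M (?Q - FS M ?Q f)) = int (card ?Q) - 2 * int (card {x\<in>?Q. f x = 0}) + int (card (FS M ?Q f))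
      - int (card {e \<in> edgesS M ?Q. \<forall>x\<in>e. f x \<noteq> 0})" using R'' unfolding Res_def by blast
  show ?thesis unfolding Res_def
  proof (rule conjI)
    show "int (dK M ?T) = int (card S) - 2 * int (card {x\<in>S. f x = 0}) + int (card (FS M S f))
      - int (card {e \<in> edgesS M S. \<forall>x\<in>e. f x \<noteq> 0})"
      unfolding A B by (simp add: E cS cZ FSeq)
  qed (rule van)
qed


lemma adjS_cong: "(\<And>x y. x \<noteq> y \<Longrightarrow> M' x y = M x y) \<Longrightarrow> adjS M' S = adjS M S"
  unfolding adjS_def by (intro ext) auto

lemma case_leaf_nz_nz:
  assumes fin: "finite S" and sym: "symS M S" and vS: "v \<in> S" and vu: "adjS M S v u"
    and uniq: "\<forall>y. adjS M S v y \<longrightarrow> y = u"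
    and eig: "eigS M S f" and fv: "f v \<noteq> 0" and fu: "f u \<noteq> 0"
    and M'_def: "M' = (\<lambda>x y. if x = u \<and> y = u then M u u - M u v * M v u / M v v else M x y)"
    and IH: "eigS M' (S - {v}) f \<Longrightarrow> Res M' (S - {v}) f"
  shows "Res M S f"
proof -
  let ?S' = "S - {v}"
  let ?Q = "S - {u, v}"
  note lb = leaf_basics[OF fin sym vS vu uniq]
  have uS: "u \<in> S" and uv: "u \<noteq> v" using lb by auto
  have split: "\<And>F. sum F S = F u + F v + sum F ?Q" using sum_split2[OF fin uS vS uv] by blast
  have uS': "u \<in> ?S'" using uS uv by blast
  have split1: "\<And>F. sum F ?S' = F u + sum F ?Q"
  proof -
    fix F
    have "sum F ?S' = F u + sum F (?S' - {u})" using fin uS' by (intro sum.remove) auto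
    moreover have "?S' - {u} = ?Q" by auto
    ultimately show "sum F ?S' = F u + sum F ?Q" by simp
  qed
  have zv: "(\<Sum>y\<in>?Q. M v y * f y) = 0" using lb(5) by (intro sum.neutral) auto
  have eqv: "M v u * f u + M v v * f v = 0"
  proof -
    have "0 = (\<Sum>y\<in>S. M v y * f y)" using eig vS unfolding eigS_def by auto
    also have "\<dots> = M v u * f u + M v v * f v + (\<Sum>y\<in>?Q. M v y * f y)" by (rule split)
    finally show ?thesis using zv by simp
  qed
  have Mvv: "M v v \<noteq> 0"
  proof
    assume "M v v = 0"
    then have "M v u * f u = 0" using eqv by simp
    then show False using lb(3) fu by simp
  qed
  have fv': "f v = - M v u * f u / M v v" using eqv Mvv by (simp add: field_simps)
  have adj': "adjS M' ?S' = adjS M ?S'" by (rule adjS_cong) (auto simp: M'_def)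
  have M'Q: "(\<Sum>y\<in>?Q. M' x y * f y) = (\<Sum>y\<in>?Q. M x y * f y)" for x
    unfolding M'_def by (intro sum.cong) auto
  have eig': "eigS M' ?S' f"
    unfolding eigS_def
  proof
    fix x assume x: "x \<in> ?S'"
    have "(\<Sum>y\<in>?S'. M' x y * f y) = M' x u * f u + (\<Sum>y\<in>?Q. M x y * f y)"
      using split1[of "\<lambda>y. M' x y * f y"] M'Q by simp
    also have "\<dots> = 0"
    proof (cases "x = u")
      case True
      have "0 = (\<Sum>y\<in>S. M u y * f y)" using eig uS unfolding eigS_def by auto
      also have "\<dots> = M u u * f u + M u v * f v + (\<Sum>y\<in>?Q. M u y * f y)" by (rule split)
      finally have e: "M u u * f u + M u v * f v + (\<Sum>y\<in>?Q. M u y * f y) = 0" by simp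
      have "M' x u * f u = M u u * f u - (M u v * M v u / M v v) * f u"
        using True unfolding M'_def by (simp add: algebra_simps)
      also have "\<dots> = M u u * f u + M u v * f v"
        unfolding fv' by (simp add: algebra_simps)
      finally show ?thesis using e True by simp
    next
      case False
      then have xQ: "x \<in> ?Q" using x by auto
      have "0 = (\<Sum>y\<in>S. M x y * f y)" using eig x unfolding eigS_def by auto
      also have "\<dots> = M x u * f u + M x v * f v + (\<Sum>y\<in>?Q. M x y * f y)" by (rule split)
      also have "M x v = 0" using lb(5)[of x] xQ by auto
      finally show ?thesis using False unfolding M'_def by simp
    qed
    finally show "(\<Sum>y\<in>?S'. M' x y * f y) = 0" .
  qed
  have R': "Res M' ?S' f" by (rule IH[OF eig'])
  have uF: "u \<notin> FS M S f" using fu unfolding FS_def by auto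
  have vF: "v \<notin> FS M S f" using fv unfolding FS_def by auto
  have FSeq: "FS M' ?S' f = FS M S f"
  proof -
    have "x \<in> FS M S f \<longleftrightarrow> x \<in> FS M' ?S' f" if x: "x \<in> ?S'" for x
    proof (cases "x = u")
      case True then show ?thesis using fu unfolding FS_def by auto
    next
      case False
      have a: "adjS M S x y \<longleftrightarrow> adjS M ?S' x y" for y
        using lb(6)[OF x, of y] False by blast
      show ?thesis unfolding FS_def adj' using a x by auto
    qed
    moreover have "FS M' ?S' f \<subseteq> ?S'" "FS M S f \<subseteq> S" unfolding FS_def by auto
    ultimately show ?thesis using vF by blast
  qed
  let ?T = "S - FS M S f"
  have uT: "u \<in> ?T" and vT: "v \<in> ?T" using uS vS uF vF by auto
  have finT: "finite ?T" using fin by simp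
  have TT: "?T - {v} = ?S' - FS M' ?S' f" using FSeq by auto
  have isoT: "\<forall>y\<in>?T. y \<notin> {u,v} \<longrightarrow> M v y = 0 \<and> M y v = 0" using lb(5) by auto
  have dk: "dK M ?T = dK M' (?T - {v})"
    by (rule K3[OF finT uT vT uv Mvv isoT M'_def])
  have cS: "card S = card ?S' + 1" using card_rm1[OF fin vS] .
  have Z: "{x\<in>S. f x = 0} = {x\<in>?S'. f x = 0}" using fv by auto
  have E': "edgesS M' ?S' = edgesS M ?S'" unfolding edgesS_def adj' ..
  have E: "card {e \<in> edgesS M S. \<forall>x\<in>e. f x \<noteq> 0} = card {e \<in> edgesS M' ?S'. \<forall>x\<in>e. f x \<noteq> 0} + 1"
  proof -
    have "{e \<in> edgesS M S. \<forall>x\<in>e. f x \<noteq> 0} = insert {u, v} {e \<in> edgesS M ?S'. \<forall>x\<in>e. f x \<noteq> 0}"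
      unfolding E_leaf(1)[OF sym vu uniq] using fu fv by auto
    moreover have "{u, v} \<notin> {e \<in> edgesS M ?S'. \<forall>x\<in>e. f x \<noteq> 0}" using E_leaf(2)[OF sym vu uniq] by simp
    moreover have "finite {e \<in> edgesS M ?S'. \<forall>x\<in>e. f x \<noteq> 0}" using finite_edges[of ?S' M] fin by simp
    ultimately show ?thesis unfolding E' by simp
  qed
  have van: "\<forall>g\<in>KS M ?T. \<forall>x\<in>S. f x = 0 \<longrightarrow> g x = 0"
  proof (intro ballI impI)
    fix g x assume g: "g \<in> KS M ?T" and x: "x \<in> S" and fx: "f x = 0"
    have xv: "x \<noteq> v" using fx fv by auto
    have vQ: "\<forall>g\<in>KS M' (?S' - FS M' ?S' f). \<forall>x\<in>?S'. f x = 0 \<longrightarrow> g x = 0"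
      using R' unfolding Res_def by blast
    have xS': "x \<in> ?S'" using x xv by blast
    have inQ: "(\<lambda>y. if y = v then 0 else g y) \<in> KS M' (?S' - FS M' ?S' f)"
      using K3_into[OF finT uT vT uv Mvv isoT M'_def g] unfolding TT .
    have "\<forall>x\<in>?S'. f x = 0 \<longrightarrow> (\<lambda>y. if y = v then 0 else g y) x = 0"
      using vQ inQ by (rule bspec)
    then have "(\<lambda>y. if y = v then 0 else g y) x = 0" using xS' fx by blast
    then show "g x = 0" using xv by simp
  qed
  have A: "int (dK M ?T) = int (dK M' (?S' - FS M' ?S' f))" using dk TT by simp
  have B: "int (dK M' (?S' - FS M' ?S' f)) = int (card ?S') - 2 * int (card {x\<in>?S'. f x = 0}) + int (card (FS M' ?S' f))
      - int (card {e \<in> edgesS M' ?S'. \<forall>x\<in>e. f x \<noteq> 0})" using R' unfolding Res_def by blast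
  show ?thesis unfolding Res_def
  proof (rule conjI)
    show "int (dK M ?T) = int (card S) - 2 * int (card {x\<in>S. f x = 0}) + int (card (FS M S f))
      - int (card {e \<in> edgesS M S. \<forall>x\<in>e. f x \<noteq> 0})"
      unfolding A B E by (simp add: cS Z FSeq)
  qed (rule van)
qed


lemma KS_empty: "KS M {} = {0}"
  unfolding KS_def by (auto simp: fun_eq_iff)

lemma dK_empty: "dK M {} = 0"
proof -
  have "card {} = fs.dim (KS M {})"
    unfolding KS_empty using fs.basis_card_eq_dim[of "{}" "{0}"] fs.span_empty fs.independent_empty by auto
  then show ?thesis unfolding dK_def by simp
qed

theorem MI:
  assumes "finite S" "symS M S" "\<not> cycS M S" "eigS M S f"
  shows "Res M S f"
  using assms
proof (induction "card S" arbitrary: S M rule: less_induct)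
  case less
  note fin = less.prems(1) and sym = less.prems(2) and nc = less.prems(3) and eig = less.prems(4)
  have IH: "Res M' S' f" if "S' \<subseteq> S" "card S' < card S" "symS M' S'" "\<not> cycS M' S'" "eigS M' S' f" for S' M'
    using less.hyps[OF that(2) finite_subset[OF that(1) fin] that(3,4,5)] .
  show ?case
  proof (cases "S = {}")
    case True
    then show ?thesis unfolding Res_def by (simp add: dK_empty edgesS_def adjS_def FS_def)
  next
    case False
    obtain v where vS: "v \<in> S" and vc: "(\<forall>y. \<not> adjS M S v y) \<or> (\<exists>u. adjS M S v u \<and> (\<forall>y. adjS M S v y \<longrightarrow> y = u))"
      using leaf_exists[OF fin False sym nc] by blast
    have cv: "card (S - {v}) < card S" using card_rm1[OF fin vS] by simp
    have symv: "symS M (S - {v})" using symS_mono[OF _ sym] by blast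
    have ncv: "\<not> cycS M (S - {v})" using cycS_mono[of "S - {v}" S M] nc by blast
    from vc show ?thesis
    proof
      assume iso: "\<forall>y. \<not> adjS M S v y"
      show ?thesis
        by (rule case_iso[OF fin sym vS iso eig]) (rule IH[OF _ cv symv ncv], auto)
    next
      assume "\<exists>u. adjS M S v u \<and> (\<forall>y. adjS M S v y \<longrightarrow> y = u)"
      then obtain u where vu: "adjS M S v u" and uniq: "\<forall>y. adjS M S v y \<longrightarrow> y = u" by blast
      note lb = leaf_basics[OF fin sym vS vu uniq]
      show ?thesis
      proof (cases "f v = 0")
        case True
        show ?thesis
          by (rule case_leaf_z[OF fin sym vS vu uniq eig True]) (rule IH[OF _ cv symv ncv], auto)
      next
        case fv: False
        show ?thesis
        proof (cases "f u = 0")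
          case True
          have "card (S - {u, v}) \<le> card (S - {v})" by (rule card_mono) (use fin in auto)
          then have cuv: "card (S - {u, v}) < card S" using cv by linarith
          have symuv: "symS M (S - {u, v})" using symS_mono[OF _ sym] by blast
          have ncuv: "\<not> cycS M (S - {u, v})" using cycS_mono[of "S - {u, v}" S M] nc by blast
          show ?thesis
            by (rule case_leaf_nz_z[OF fin sym vS vu uniq eig fv True]) (rule IH[OF _ cuv symuv ncuv], auto)
        next
          case fu: False
          define M' where "M' = (\<lambda>x y. if x = u \<and> y = u then M u u - M u v * M v u / M v v else M x y)"
          have adj': "adjS M' (S - {v}) = adjS M (S - {v})" by (rule adjS_cong) (auto simp: M'_def)
          have symv': "symS M' (S - {v})" using symv unfolding symS_def M'_def by auto
          have ncv': "\<not> cycS M' (S - {v})" using ncv unfolding cycS_def adj' .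
          show ?thesis
            by (rule case_leaf_nz_nz[OF fin sym vS vu uniq eig fv fu M'_def]) (rule IH[OF _ cv symv' ncv'], auto)
        qed
      qed
    qed
  qed
qed


lemma claimB:
  assumes fin: "finite S" and sym: "symS M S" and R: "Res M S f"
  shows "dK M (S - FS M S f) \<le> dK M S"
proof -
  let ?F = "FS M S f"
  have van: "\<forall>g\<in>KS M (S - ?F). \<forall>x\<in>S. f x = 0 \<longrightarrow> g x = 0" using R unfolding Res_def by blast
  have FS: "?F \<subseteq> S" unfolding FS_def by auto
  have sub: "KS M (S - ?F) \<subseteq> KS M S"
  proof
    fix g assume g: "g \<in> KS M (S - ?F)"
    have gF: "g y = 0" if "y \<in> ?F" for y using KS_support[OF g] that by simp
    have "(\<Sum>y\<in>S. M x y * g y) = 0" if x: "x \<in> S" for x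
    proof -
      have "(\<Sum>y\<in>S. M x y * g y) = (\<Sum>y\<in>S - ?F. M x y * g y) + (\<Sum>y\<in>?F. M x y * g y)"
        using sum.subset_diff[OF FS fin] by simp
      also have "(\<Sum>y\<in>?F. M x y * g y) = 0" using gF by (intro sum.neutral) auto
      finally have e: "(\<Sum>y\<in>S. M x y * g y) = (\<Sum>y\<in>S - ?F. M x y * g y)" by simp
      show ?thesis
      proof (cases "x \<in> ?F")
        case False
        then show ?thesis using e g x unfolding KS_def by auto
      next
        case True
        have "M x y * g y = 0" if y: "y \<in> S - ?F" for y
        proof (cases "adjS M S x y")
          case True
          then have "f y = 0" using \<open>x \<in> ?F\<close> unfolding FS_def by auto
          then have "g y = 0" using van g y by blast
          then show ?thesis by simp
        next
          case False
          have "x \<noteq> y" using y \<open>x \<in> ?F\<close> by auto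
          then have "M x y = 0" using nonadj_zero(1)[OF sym x _ _ False] y by auto
          then show ?thesis by simp
        qed
        then have "(\<Sum>y\<in>S - ?F. M x y * g y) = 0" by (intro sum.neutral) auto
        then show ?thesis using e by simp
      qed
    qed
    moreover have "g x = 0" if "x \<notin> S" for x using KS_support[OF g] that by auto
    ultimately show "g \<in> KS M S" unfolding KS_def by auto
  qed
  show ?thesis unfolding dK_def by (rule dim_mono_supp[OF fin KS_supp sub])
qed


lemma mult_mat_vec_sum:
  assumes "A \<in> carrier_mat n n" "v \<in> carrier_vec n" "i < n"
  shows "(A *\<^sub>v v) $ i = (\<Sum>j<n. A $$ (i, j) * v $ j)"
  using assms by (auto simp: scalar_prod_def lessThan_atLeast0 intro!: sum.cong)

lemma sym_real_eig_real:
  fixes B :: "real mat"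
  assumes B: "B \<in> carrier_mat n n" and sym: "transpose_mat B = B"
    and ev: "eigenvector (map_mat complex_of_real B) v a"
  shows "a = of_real (Re a)"
proof -
  let ?Bc = "map_mat complex_of_real B"
  have Bc: "?Bc \<in> carrier_mat n n" using B by simp
  from ev have v: "v \<in> carrier_vec n" and v0: "v \<noteq> 0\<^sub>v n" and Bv: "?Bc *\<^sub>v v = a \<cdot>\<^sub>v v"
    unfolding eigenvector_def using B by auto
  have symB: "B $$ (i, j) = B $$ (j, i)" if "i < n" "j < n" for i j
    using arg_cong[OF sym, of "\<lambda>M. M $$ (j, i)"] that B by auto
  have comp: "(\<Sum>j<n. complex_of_real (B $$ (i, j)) * v $ j) = a * v $ i" if i: "i < n" for i
  proof -
    have "(?Bc *\<^sub>v v) $ i = (\<Sum>j<n. ?Bc $$ (i, j) * v $ j)" by (rule mult_mat_vec_sum[OF Bc v i])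
    also have "\<dots> = (\<Sum>j<n. complex_of_real (B $$ (i, j)) * v $ j)"
      using B i by (intro sum.cong) auto
    finally show ?thesis using Bv i v by simp
  qed
  define s where "s = (\<Sum>i<n. \<Sum>j<n. cnj (v $ i) * complex_of_real (B $$ (i, j)) * v $ j)"
  define N where "N = (\<Sum>i<n. cnj (v $ i) * v $ i)"
  have sN: "s = a * N"
  proof -
    have "s = (\<Sum>i<n. cnj (v $ i) * (\<Sum>j<n. complex_of_real (B $$ (i, j)) * v $ j))"
      unfolding s_def by (simp add: sum_distrib_left mult.assoc)
    also have "\<dots> = (\<Sum>i<n. cnj (v $ i) * (a * v $ i))" using comp by simp
    finally show ?thesis unfolding N_def by (simp add: sum_distrib_left algebra_simps)
  qed
  have cs: "cnj s = s"
  proof -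
    have "cnj s = (\<Sum>i<n. \<Sum>j<n. v $ i * complex_of_real (B $$ (i, j)) * cnj (v $ j))"
      unfolding s_def by (simp add: cnj_sum)
    also have "\<dots> = (\<Sum>j<n. \<Sum>i<n. v $ i * complex_of_real (B $$ (i, j)) * cnj (v $ j))"
      by (rule sum.swap)
    also have "\<dots> = s"
      unfolding s_def using symB by (intro sum.cong refl) (auto simp: algebra_simps)
    finally show ?thesis .
  qed
  have NR: "N = complex_of_real (\<Sum>i<n. (cmod (v $ i))\<^sup>2)"
  proof -
    have "N = (\<Sum>i<n. complex_of_real ((cmod (v $ i))\<^sup>2))"
      unfolding N_def by (intro sum.cong refl) (simp only: complex_norm_square mult.commute)
    then show ?thesis by simp
  qed
  have Npos: "(\<Sum>i<n. (cmod (v $ i))\<^sup>2) > 0"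
  proof -
    obtain i where i: "i < n" "v $ i \<noteq> 0" using v v0 by (metis eq_vecI carrier_vecD index_zero_vec)
    have "(cmod (v $ i))\<^sup>2 > 0" using i by simp
    moreover have "(cmod (v $ i))\<^sup>2 \<le> (\<Sum>i<n. (cmod (v $ i))\<^sup>2)"
      using i by (intro member_le_sum) auto
    ultimately show ?thesis by linarith
  qed
  have N0: "N \<noteq> 0" unfolding NR using Npos by (metis of_real_eq_0_iff less_irrefl)
  have aN: "a = s / N" using sN N0 by (simp add: field_simps)
  have cN: "cnj N = N" unfolding NR by (simp only: complex_cnj_complex_of_real)
  have "cnj a = a" unfolding aN using cs cN by (simp only: complex_cnj_divide)
  then have "a \<in> \<real>" using Reals_cnj_iff by blast
  then show ?thesis by (metis Re_complex_of_real Reals_cases)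
qed


interpretation ofr: map_poly_inj_idom_hom "of_real :: real \<Rightarrow> complex" ..

lemma char_poly_split_sym:
  fixes B :: "real mat"
  assumes B: "B \<in> carrier_mat n n" and sym: "transpose_mat B = B"
  shows "\<exists>es. char_poly B = (\<Prod>a\<leftarrow>es. [:- a, 1:])"
proof -
  let ?Bc = "map_mat complex_of_real B"
  have Bc: "?Bc \<in> carrier_mat n n" using B by simp
  obtain as where as: "char_poly ?Bc = (\<Prod>a\<leftarrow>as. [:- a, 1:])"
    using char_poly_factorized[OF Bc] by blast
  have real: "a = of_real (Re a)" if a: "a \<in> set as" for a
  proof -
    have "poly (char_poly ?Bc) a = 0" unfolding as using a
      by (induct as) auto
    then have "eigenvalue ?Bc a" using eigenvalue_root_char_poly[OF Bc] by simp
    then obtain v where "eigenvector ?Bc v a" unfolding eigenvalue_def by blast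
    then show ?thesis by (rule sym_real_eig_real[OF B sym])
  qed
  have "map_poly complex_of_real (char_poly B) = char_poly ?Bc"
    by (rule of_real_hom.char_poly_hom[OF B, symmetric])
  also have "\<dots> = (\<Prod>a\<leftarrow>map Re as. [:- complex_of_real a, 1:])"
    unfolding as using real by (induct as) auto
  also have "\<dots> = map_poly complex_of_real (\<Prod>a\<leftarrow>map Re as. [:- a, 1:])"
    unfolding ofr.hom_prod_list by (simp add: o_def)
  finally have "char_poly B = (\<Prod>a\<leftarrow>map Re as. [:- a, 1:])" by simp
  then show ?thesis by blast
qed

lemma kernel_dim_cong:
  assumes "mat_kernel A = mat_kernel A'" "dim_col A = dim_col A'"
  shows "kernel_dim A = kernel_dim A'"
  using assms unfolding kernel_dim_def by simp

lemma sum_list_min_aux: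
  assumes "\<forall>n\<in>set L. (n::nat) \<ge> 1" "sum_list (map (min 2) L) = sum_list (map (min 1) L)"
  shows "sum_list L = sum_list (map (min 1) L)"
  using assms
proof (induct L)
  case Nil then show ?case by simp
next
  case (Cons x L)
  have "sum_list (map (min 1) L) \<le> sum_list (map (min 2) L)"
    by (rule sum_list_mono) auto
  moreover have "min 1 x \<le> min 2 x" by simp
  ultimately have "min 2 x = min 1 x" "sum_list (map (min 2) L) = sum_list (map (min 1) L)"
    using Cons.prems(2) by auto
  then show ?case using Cons by auto
qed

lemma order_eq_kernel_dim:
  fixes B :: "real mat"
  assumes B: "B \<in> carrier_mat n n" and sym: "transpose_mat B = B"
  shows "Polynomial.order lam (char_poly B) = kernel_dim (char_matrix B lam)"
proof -
  obtain es where es: "char_poly B = (\<Prod>a\<leftarrow>es. [:- a, 1:])"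
    using char_poly_split_sym[OF B sym] by blast
  obtain n_as where jnf: "jordan_nf B n_as" using jordan_nf_exists[OF B es] by blast
  let ?C = "char_matrix B lam"
  have C: "?C \<in> carrier_mat n n" using B by simp
  have symC: "?C $$ (i, j) = ?C $$ (j, i)" if "i < n" "j < n" for i j
    using arg_cong[OF sym, of "\<lambda>M. M $$ (j, i)"] that B by (auto simp: char_matrix_def)
  have p1: "?C ^\<^sub>m 1 = ?C" using C by simp
  have p2: "?C ^\<^sub>m 2 = ?C * ?C" using C by (simp add: numeral_2_eq_2)
  have ker: "mat_kernel (?C * ?C) = mat_kernel ?C"
  proof
    show "mat_kernel ?C \<subseteq> mat_kernel (?C * ?C)"
      using mat_kernel_mult_subset[OF C C] by simp
  next
    show "mat_kernel (?C * ?C) \<subseteq> mat_kernel ?C"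
    proof
      fix v assume v: "v \<in> mat_kernel (?C * ?C)"
      then have vc: "v \<in> carrier_vec n" and e: "(?C * ?C) *\<^sub>v v = 0\<^sub>v n"
        using mat_kernelD[OF mult_carrier_mat[OF C C]] by auto
      define w where "w = ?C *\<^sub>v v"
      have wc: "w \<in> carrier_vec n" unfolding w_def using C vc by simp
      have Cw: "?C *\<^sub>v w = 0\<^sub>v n" unfolding w_def using e assoc_mult_mat_vec[OF C C vc] by simp
      have wi: "w $ i = (\<Sum>j<n. ?C $$ (i, j) * v $ j)" if "i < n" for i
        unfolding w_def by (rule mult_mat_vec_sum[OF C vc that])
      have Cwi: "(\<Sum>j<n. ?C $$ (i, j) * w $ j) = 0" if "i < n" for i
        using mult_mat_vec_sum[OF C wc that] Cw that by simp
      have "(\<Sum>i<n. w $ i * w $ i) = (\<Sum>i<n. (\<Sum>j<n. ?C $$ (i, j) * v $ j) * w $ i)"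
        using wi by simp
      also have "\<dots> = (\<Sum>i<n. \<Sum>j<n. ?C $$ (i, j) * v $ j * w $ i)"
        by (simp add: sum_distrib_right)
      also have "\<dots> = (\<Sum>j<n. \<Sum>i<n. ?C $$ (i, j) * v $ j * w $ i)"
        by (rule sum.swap)
      also have "\<dots> = (\<Sum>j<n. v $ j * (\<Sum>i<n. ?C $$ (j, i) * w $ i))"
        using symC by (simp add: sum_distrib_left algebra_simps)
      also have "\<dots> = 0" using Cwi by simp
      finally have ss: "(\<Sum>i<n. w $ i * w $ i) = 0" .
      have "w $ i = 0" if "i < n" for i
      proof -
        have "(\<Sum>i<n. w $ i * w $ i) = 0 \<longleftrightarrow> (\<forall>i\<in>{..<n}. w $ i * w $ i = 0)"
          by (rule sum_nonneg_eq_0_iff) auto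
        then show ?thesis using ss that by simp
      qed
      then have "w = 0\<^sub>v n" using wc by (intro eq_vecI) auto
      then show "v \<in> mat_kernel ?C" unfolding w_def using mat_kernelI[OF C vc] by simp
    qed
  qed
  have d12: "dim_gen_eigenspace B lam 2 = dim_gen_eigenspace B lam 1"
    unfolding dim_gen_eigenspace_def p1 p2 using C by (intro kernel_dim_cong ker) auto
  let ?L = "map fst [(n, e)\<leftarrow>n_as . e = lam]"
  have pos: "\<forall>m\<in>set ?L. m \<ge> 1" using jnf unfolding jordan_nf_def by force
  have "Polynomial.order lam (char_poly B) = sum_list ?L"
    unfolding jordan_nf_order[OF jnf] by (simp add: split_def)
  also have "\<dots> = sum_list (map (min 1) ?L)"
    using sum_list_min_aux[OF pos] d12 unfolding dim_gen_eigenspace[OF jnf] by simp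
  also have "\<dots> = dim_gen_eigenspace B lam 1"
    unfolding dim_gen_eigenspace[OF jnf] by simp
  also have "\<dots> = kernel_dim ?C" unfolding dim_gen_eigenspace_def p1 ..
  finally show ?thesis .
qed


context
  fixes I :: "nat set"
  assumes finI: "finite I"
begin

definition vidx :: "nat \<Rightarrow> nat" where "vidx x = card {a\<in>I. a < x}"

lemma pick_in: "i < card I \<Longrightarrow> pick I i \<in> I"
  by (rule pick_in_set_le)

lemma vidx_pick: "i < card I \<Longrightarrow> vidx (pick I i) = i"
  unfolding vidx_def by (rule card_pick_le)

lemma pick_vidx: "x \<in> I \<Longrightarrow> pick I (vidx x) = x"
  unfolding vidx_def by (rule pick_card_in_set)

lemma vidx_less: "x \<in> I \<Longrightarrow> vidx x < card I"
  unfolding vidx_def using finI by (intro psubset_card_mono) auto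

lemma bij_pick: "bij_betw (pick I) {..<card I} I"
proof (rule bij_betw_byWitness[where f' = vidx])
  show "\<forall>a\<in>{..<card I}. vidx (pick I a) = a" using vidx_pick by auto
  show "\<forall>a'\<in>I. pick I (vidx a') = a'" using pick_vidx by auto
  show "pick I ` {..<card I} \<subseteq> I" using pick_in by auto
  show "vidx ` I \<subseteq> {..<card I}" using vidx_less by auto
qed

definition vphi :: "real vec \<Rightarrow> nat \<Rightarrow> real" where
  "vphi w = (\<lambda>x. if x \<in> I then w $ vidx x else 0)"

lemma vphi_inj: "inj_on vphi (carrier_vec (card I))"
proof
  fix v w assume v: "v \<in> carrier_vec (card I)" and w: "w \<in> carrier_vec (card I)" and e: "vphi v = vphi w"
  show "v = w"
  proof (rule eq_vecI)
    fix i assume "i < dim_vec w"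
    then have i: "i < card I" using w by simp
    have "vphi v (pick I i) = vphi w (pick I i)" using e by simp
    then show "v $ i = w $ i" unfolding vphi_def using pick_in[OF i] vidx_pick[OF i] by simp
  qed (use v w in simp)
qed

lemma kernel_dim_fs:
  assumes C: "C \<in> carrier_mat (card I) (card I)"
  shows "kernel_dim C = fs.dim (vphi ` mat_kernel C)"
proof -
  let ?k = "card I"
  interpret K: kernel ?k ?k C by unfold_locales (rule C)
  obtain Bs where Bs: "finite Bs" "K.basis Bs" using kernel_basis_exists[OF C] by blast
  have BsK: "Bs \<subseteq> mat_kernel C" using Bs(2) unfolding K.Ker.basis_def by auto
  have kc: "mat_kernel C \<subseteq> carrier_vec ?k" using mat_kernel_carrier[OF C] by auto
  have Bsc: "Bs \<subseteq> carrier_vec ?k" using BsK kc by auto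
  have spanBs: "K.span Bs = mat_kernel C" using Bs(2) unfolding K.Ker.basis_def by auto
  have indBs: "K.lin_indpt Bs" using Bs(2) unfolding K.Ker.basis_def by auto
  have kd: "kernel_dim C = card Bs" using K.Ker.dim_basis[OF Bs] by simp
  have injB: "inj_on vphi Bs" using inj_on_subset[OF vphi_inj Bsc] .
  have cardB: "card (vphi ` Bs) = card Bs" using card_image[OF injB] .
  have vphi_lincomb: "vphi (K.lincomb a A) = (\<Sum>b\<in>A. (\<lambda>x. a b * vphi b x))" if A: "A \<subseteq> Bs" for a A
  proof
    fix x
    have AK: "A \<subseteq> mat_kernel C" using A BsK by auto
    show "vphi (K.lincomb a A) x = (\<Sum>b\<in>A. (\<lambda>x. a b * vphi b x)) x"
    proof (cases "x \<in> I")
      case True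
      then show ?thesis unfolding vphi_def sum_fun_app using K.lincomb_index[OF vidx_less[OF True] AK] by simp
    next
      case False
      then show ?thesis unfolding vphi_def sum_fun_app by simp
    qed
  qed
  have sub: "vphi ` Bs \<subseteq> vphi ` mat_kernel C" using BsK by auto
  have span: "vphi ` mat_kernel C \<subseteq> fs.span (vphi ` Bs)"
  proof
    fix g assume "g \<in> vphi ` mat_kernel C"
    then obtain w where w: "w \<in> mat_kernel C" "g = vphi w" by auto
    then have "w \<in> K.span Bs" using spanBs by simp
    then obtain a A where aA: "w = K.lincomb a A" "finite A" "A \<subseteq> Bs"
      unfolding K.Ker.span_def by auto
    have "g = (\<Sum>b\<in>A. (\<lambda>x. a b * vphi b x))" using w aA vphi_lincomb by simp
    also have "\<dots> \<in> fs.span (vphi ` Bs)"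
      using aA(3) by (intro fs.span_sum fs.span_scale fs.span_base) auto
    finally show "g \<in> fs.span (vphi ` Bs)" .
  qed
  have ind: "fs.independent (vphi ` Bs)"
  proof (rule fs.independent_if_scalars_zero)
    show "finite (vphi ` Bs)" using Bs(1) by simp
  next
    fix c y assume s: "(\<Sum>y\<in>vphi ` Bs. (\<lambda>x. c y * y x)) = 0" and y: "y \<in> vphi ` Bs"
    have s': "(\<Sum>b\<in>Bs. (\<lambda>x. c (vphi b) * vphi b x)) = 0"
      using s sum.reindex[OF injB, of "\<lambda>y. (\<lambda>x. c y * y x)"] by simp
    define w where "w = K.lincomb (c \<circ> vphi) Bs"
    have wK: "w \<in> mat_kernel C" unfolding w_def by (rule K.Ker.lincomb_closed) (use BsK in auto)
    have "vphi w = 0" unfolding w_def using vphi_lincomb[of Bs "c \<circ> vphi"] s' by simp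
    moreover have "vphi (0\<^sub>v ?k) = 0" unfolding vphi_def by (auto simp: fun_eq_iff vidx_less)
    ultimately have w0: "w = 0\<^sub>v ?k" using vphi_inj wK kc by (metis inj_onD zero_carrier_vec subsetD)
    obtain b where b: "b \<in> Bs" "y = vphi b" using y by auto
    show "c y = 0"
    proof (rule ccontr)
      assume "c y \<noteq> 0"
      then have "K.lin_dep Bs"
        unfolding K.Ker.lin_dep_def using Bs(1) b w0 unfolding w_def
        by (intro exI[of _ Bs] exI[of _ "c \<circ> vphi"] exI[of _ b]) auto
      then show False using indBs by simp
    qed
  qed
  have "card (vphi ` Bs) = fs.dim (vphi ` mat_kernel C)"
    by (rule fs.basis_card_eq_dim[OF sub span ind])
  then show ?thesis using kd cardB by simp
qed

end


lemma KS_image: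
  fixes A :: "real mat" and lam :: real
  assumes A: "A \<in> carrier_mat n n" and I: "I \<subseteq> {0..<n}"
  defines "M \<equiv> (\<lambda>x y. A $$ (x, y) - (if x = y then lam else 0))"
  shows "vphi I ` mat_kernel (char_matrix (submatrix A I I) lam) = KS M I"
proof -
  have finI: "finite I" using I finite_subset by blast
  let ?k = "card I"
  have dimS: "card {i. i < dim_row A \<and> i \<in> I} = ?k"
    using A I by (intro arg_cong[of _ _ card]) auto
  have dimS': "card {j. j < dim_col A \<and> j \<in> I} = ?k"
    using A I by (intro arg_cong[of _ _ card]) auto
  let ?S = "submatrix A I I"
  have S: "?S \<in> carrier_mat ?k ?k" using dimS dimS' unfolding carrier_mat_def by (simp add: dim_submatrix)
  let ?C = "char_matrix ?S lam"
  have C: "?C \<in> carrier_mat ?k ?k" using S by simp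
  have pinj: "pick I i = pick I j \<longleftrightarrow> i = j" if "i < ?k" "j < ?k" for i j
    using vidx_pick[OF finI that(1)] vidx_pick[OF finI that(2)] by metis
  have Cij: "?C $$ (i, j) = M (pick I i) (pick I j)" if "i < ?k" "j < ?k" for i j
    using that S submatrix_index[of i A I j I] dimS dimS' pinj[OF that]
    unfolding char_matrix_def M_def by auto
  have reidx: "(\<Sum>j<?k. F (pick I j)) = (\<Sum>y\<in>I. F y)" for F :: "nat \<Rightarrow> real"
    using sum.reindex_bij_betw[OF bij_pick[OF finI], of F] .
  show ?thesis
  proof
    show "vphi I ` mat_kernel ?C \<subseteq> KS M I"
    proof
      fix g assume "g \<in> vphi I ` mat_kernel ?C"
      then obtain w where w: "w \<in> mat_kernel ?C" "g = vphi I w" by auto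
      have wc: "w \<in> carrier_vec ?k" and Cw: "?C *\<^sub>v w = 0\<^sub>v ?k" using mat_kernelD[OF C w(1)] by auto
      have "(\<Sum>y\<in>I. M x y * g y) = 0" if x: "x \<in> I" for x
      proof -
        have ix: "vidx I x < ?k" using vidx_less[OF finI x] .
        have "(\<Sum>y\<in>I. M x y * g y) = (\<Sum>j<?k. M x (pick I j) * g (pick I j))" using reidx[of "\<lambda>y. M x y * g y"] by simp
        also have "\<dots> = (\<Sum>j<?k. ?C $$ (vidx I x, j) * w $ j)"
        proof (intro sum.cong refl)
          fix j assume "j \<in> {..<?k}"
          then have j: "j < ?k" by simp
          have "g (pick I j) = w $ j" unfolding w(2) vphi_def[OF finI] using pick_in[OF finI j] vidx_pick[OF finI j] by simp
          then show "M x (pick I j) * g (pick I j) = ?C $$ (vidx I x, j) * w $ j"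
            using Cij[OF ix j] pick_vidx[OF finI x] by simp
        qed
        also have "\<dots> = (?C *\<^sub>v w) $ vidx I x" using mult_mat_vec_sum[OF C wc ix] by simp
        also have "\<dots> = 0" using Cw ix by simp
        finally show ?thesis .
      qed
      then show "g \<in> KS M I" unfolding KS_def w(2) vphi_def[OF finI] by auto
    qed
  next
    show "KS M I \<subseteq> vphi I ` mat_kernel ?C"
    proof
      fix g assume g: "g \<in> KS M I"
      define w where "w = vec ?k (\<lambda>i. g (pick I i))"
      have wc: "w \<in> carrier_vec ?k" unfolding w_def by simp
      have "vphi I w = g"
      proof
        fix x show "vphi I w x = g x"
          using g vidx_less[OF finI] pick_vidx[OF finI] unfolding vphi_def[OF finI] w_def KS_def by auto
      qed
      moreover have "w \<in> mat_kernel ?C"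
      proof (rule mat_kernelI[OF C wc])
        show "?C *\<^sub>v w = 0\<^sub>v ?k"
        proof (rule eq_vecI)
          fix i assume "i < dim_vec (0\<^sub>v ?k :: real vec)"
          then have i: "i < ?k" by simp
          have "(?C *\<^sub>v w) $ i = (\<Sum>j<?k. ?C $$ (i, j) * w $ j)" by (rule mult_mat_vec_sum[OF C wc i])
          also have "\<dots> = (\<Sum>j<?k. M (pick I i) (pick I j) * g (pick I j))"
            using Cij[OF i] unfolding w_def by (intro sum.cong) auto
          also have "\<dots> = (\<Sum>y\<in>I. M (pick I i) y * g y)" using reidx[of "\<lambda>y. M (pick I i) y * g y"] by simp
          also have "\<dots> = 0" using g pick_in[OF finI i] unfolding KS_def by auto
          finally show "(?C *\<^sub>v w) $ i = 0\<^sub>v ?k $ i" using i by simp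
        qed (use C in simp)
      qed
      ultimately show "g \<in> vphi I ` mat_kernel ?C" by blast
    qed
  qed
qed

lemma eig_mult_dK:
  fixes A :: "real mat"
  assumes A: "A \<in> carrier_mat n n" and sym: "transpose_mat A = A" and I: "I \<subseteq> {0..<n}"
  shows "eig_mult (submatrix A I I) lam = dK (\<lambda>x y. A $$ (x, y) - (if x = y then lam else 0)) I"
proof -
  have finI: "finite I" using I finite_subset by blast
  let ?k = "card I"
  have dimS: "card {i. i < dim_row A \<and> i \<in> I} = ?k"
    using A I by (intro arg_cong[of _ _ card]) auto
  have dimS': "card {j. j < dim_col A \<and> j \<in> I} = ?k"
    using A I by (intro arg_cong[of _ _ card]) auto
  let ?S = "submatrix A I I"
  have S: "?S \<in> carrier_mat ?k ?k" using dimS dimS' unfolding carrier_mat_def by (simp add: dim_submatrix)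
  have symS: "transpose_mat ?S = ?S"
  proof (rule eq_matI)
    fix i j assume "i < dim_row ?S" "j < dim_col ?S"
    then have ij: "i < ?k" "j < ?k" using S by auto
    have pi: "pick I i < n" "pick I j < n" using pick_in[OF finI ij(1)] pick_in[OF finI ij(2)] I by auto
    have "A $$ (pick I j, pick I i) = A $$ (pick I i, pick I j)"
      using arg_cong[OF sym, of "\<lambda>M. M $$ (pick I i, pick I j)"] pi A by simp
    then show "transpose_mat ?S $$ (i, j) = ?S $$ (i, j)"
      using ij S submatrix_index[of _ A I _ I] dimS dimS' by auto
  qed (use S in auto)
  have "eig_mult ?S lam = kernel_dim (char_matrix ?S lam)"
    unfolding eig_mult_def by (rule order_eq_kernel_dim[OF S symS])
  also have "\<dots> = fs.dim (vphi I ` mat_kernel (char_matrix ?S lam))"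
    by (rule kernel_dim_fs[OF finI]) (use S in simp)
  also have "\<dots> = dK (\<lambda>x y. A $$ (x, y) - (if x = y then lam else 0)) I"
    unfolding dK_def KS_image[OF A I] ..
  finally show ?thesis .
qed


lemma pick_atLeast0: "i < n \<Longrightarrow> pick {0..<n} i = i"
proof -
  assume i: "i < n"
  have "{a \<in> {0..<n}. a < i} = {0..<i}" using i by auto
  then have "card {a \<in> {0..<n}. a < i} = i" by simp
  then show ?thesis using pick_card_in_set[of i "{0..<n}"] i by simp
qed

lemma submatrix_full:
  assumes A: "A \<in> carrier_mat n n"
  shows "submatrix A {0..<n} {0..<n} = A"
proof -
  have c: "card {i. i < dim_row A \<and> i \<in> {0..<n}} = n" "card {i. i < dim_col A \<and> i \<in> {0..<n}} = n"
    using A by (auto intro: arg_cong[of _ _ card])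
  show ?thesis
  proof (rule eq_matI)
    fix i j assume "i < dim_row A" "j < dim_col A"
    then have "i < n" "j < n" using A by auto
    then show "submatrix A {0..<n} {0..<n} $$ (i, j) = A $$ (i, j)"
      using submatrix_index[of i A "{0..<n}" j "{0..<n}"] c pick_atLeast0 by simp
  qed (use A c in \<open>auto simp: dim_submatrix\<close>)
qed

theorem corollary5p4:
  fixes A :: "real mat" and n :: nat and lam :: real and f :: "real vec"
  assumes "A \<in> carrier_mat n n"
    and "A\<^sup>T = A"
    and "\<not> has_cycle A"
    and "eigenvalue A lam"
    and "eigenvector A f lam"
  defines "F \<equiv> {x \<in> mvert A. f $ x = 0 \<and> (\<forall>y. madj A x y \<longrightarrow> f $ y = 0)}"
  defines "z \<equiv> card {x \<in> mvert A. f $ x = 0}"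
  defines "e0 \<equiv> card {e \<in> medges A. \<exists>x \<in> e. f $ x = 0}"
  defines "c \<equiv> num_components A"
  shows "eig_mult A lam \<ge> eig_mult (submatrix A (mvert A - F) (mvert A - F)) lam
    \<and> int (eig_mult (submatrix A (mvert A - F) (mvert A - F)) lam)
        = int e0 - 2 * int z + int c + int (card F)"
proof -
  note A = assms(1)
  define M where "M = (\<lambda>x y. A $$ (x, y) - (if x = y then lam else 0))"
  define V where "V = {0..<n}"
  define fv where "fv = (\<lambda>x. f $ x)"
  have mv: "mvert A = V" unfolding mvert_def V_def using A by simp
  have adj: "madj A = adjS M V"
    unfolding madj_def[abs_def] adjS_def[abs_def] M_def V_def using A by (intro ext) auto
  have cyc: "has_cycle A = cycS M V" unfolding has_cycle_def cycS_def adj ..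
  have edg: "medges A = edgesS M V" unfolding medges_def edgesS_def adj ..
  have ncmp: "num_components A = ncomp M V" unfolding num_components_def ncomp_def compR_def adj mv ..
  have FF: "F = FS M V fv" unfolding F_def FS_def adj mv fv_def ..
  have finV: "finite V" unfolding V_def by simp
  have sym: "symS M V"
    unfolding symS_def M_def V_def
  proof (intro ballI)
    fix x y assume "x \<in> {0..<n}" "y \<in> {0..<n}"
    then show "A $$ (x, y) - (if x = y then lam else 0) = A $$ (y, x) - (if y = x then lam else 0)"
      using arg_cong[OF assms(2), of "\<lambda>B. B $$ (y, x)"] A by auto
  qed
  have nc: "\<not> cycS M V" using assms(3) cyc by simp
  have fc: "f \<in> carrier_vec n" and Af: "A *\<^sub>v f = lam \<cdot>\<^sub>v f"
    using assms(5) A unfolding eigenvector_def by auto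
  have eig: "eigS M V fv"
    unfolding eigS_def
  proof
    fix x assume x: "x \<in> V"
    then have xn: "x < n" unfolding V_def by simp
    have "(\<Sum>y\<in>V. M x y * fv y) = (\<Sum>y\<in>V. A $$ (x, y) * f $ y) - (\<Sum>y\<in>V. (if x = y then lam else 0) * f $ y)"
      unfolding M_def fv_def by (simp add: sum_subtractf algebra_simps)
    also have "(\<Sum>y\<in>V. (if x = y then lam else 0) * f $ y) = (\<Sum>y\<in>V. if x = y then lam * f $ y else 0)"
      by (intro sum.cong) auto
    also have "\<dots> = lam * f $ x" using x finV by (simp add: sum.delta')
    also have "(\<Sum>y\<in>V. A $$ (x, y) * f $ y) = (A *\<^sub>v f) $ x"
      using mult_mat_vec_sum[OF A fc xn] unfolding V_def by (simp add: lessThan_atLeast0)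
    also have "\<dots> = lam * f $ x" using Af xn fc by simp
    finally show "(\<Sum>y\<in>V. M x y * fv y) = 0" by simp
  qed
  have R: "Res M V fv" by (rule MI[OF finV sym nc eig])
  have FV: "F \<subseteq> V" unfolding FF FS_def by auto
  have I: "V - F \<subseteq> {0..<n}" unfolding V_def by auto
  have d1: "eig_mult (submatrix A (mvert A - F) (mvert A - F)) lam = dK M (V - F)"
    unfolding mv M_def by (rule eig_mult_dK[OF A assms(2) I])
  have d2: "eig_mult A lam = dK M V"
  proof -
    have "eig_mult A lam = eig_mult (submatrix A V V) lam" unfolding V_def using submatrix_full[OF A] by simp
    also have "\<dots> = dK M V" unfolding M_def by (rule eig_mult_dK[OF A assms(2)]) (simp add: V_def)
    finally show ?thesis .
  qed
  have ineq: "dK M (V - F) \<le> dK M V" unfolding FF by (rule claimB[OF finV sym R])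
  have eqn: "int (dK M (V - F)) = int (card V) - 2 * int (card {x\<in>V. fv x = 0}) + int (card F)
        - int (card {e \<in> edgesS M V. \<forall>x\<in>e. fv x \<noteq> 0})"
    using R unfolding Res_def FF by blast
  have fc_count: "card (edgesS M V) + ncomp M V = card V" by (rule forest_count[OF finV sym nc])
  have finE: "finite (edgesS M V)" by (rule finite_edges[OF finV])
  have split: "card (edgesS M V) = card {e \<in> edgesS M V. \<exists>x\<in>e. fv x = 0} + card {e \<in> edgesS M V. \<forall>x\<in>e. fv x \<noteq> 0}"
  proof -
    have "edgesS M V = {e \<in> edgesS M V. \<exists>x\<in>e. fv x = 0} \<union> {e \<in> edgesS M V. \<forall>x\<in>e. fv x \<noteq> 0}" by auto
    moreover have "{e \<in> edgesS M V. \<exists>x\<in>e. fv x = 0} \<inter> {e \<in> edgesS M V. \<forall>x\<in>e. fv x \<noteq> 0} = {}" by auto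
    ultimately show ?thesis using finE card_Un_disjoint[of "{e \<in> edgesS M V. \<exists>x\<in>e. fv x = 0}" "{e \<in> edgesS M V. \<forall>x\<in>e. fv x \<noteq> 0}"]
      by (metis (no_types, lifting) finite_Un)
  qed
  have e0': "e0 = card {e \<in> edgesS M V. \<exists>x\<in>e. fv x = 0}" unfolding e0_def edg fv_def ..
  have z': "z = card {x\<in>V. fv x = 0}" unfolding z_def mv fv_def ..
  have c': "c = ncomp M V" unfolding c_def ncmp ..
  show ?thesis
  proof
    show "eig_mult (submatrix A (mvert A - F) (mvert A - F)) lam \<le> eig_mult A lam"
      unfolding d1 d2 by (rule ineq)
    show "int (eig_mult (submatrix A (mvert A - F) (mvert A - F)) lam) = int e0 - 2 * int z + int c + int (card F)"
      unfolding d1 eqn e0' z' c' using fc_count split by linarith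
  qed
qed


end
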